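(* In the setting below, if $A$ is not identically zero on $G$, then $\overline d(\mathcal S(\widehat a))<\infty$.
   Context: Let $\alpha$ be a PV number of degree $d\ge2$ (real algebraic integer, all other Galois conjugates $\alpha_2,\dots,\alpha_d$ of modulus $<1$). Let $\mathbb T=\mathbb R/\mathbb Z$, $\mathbb T^{\mathbb Z}$ the group of maps $\mathbb Z\to\mathbb T$ with product topology, $\theta(y)(j)=y\alpha^j+\mathbb Z$, $\vartheta(s)(j)=\sum_{k=1}^d s_k\alpha_k^j+\mathbb Z$ for $s\in S=\{s\in\mathbb C^d:s_1\in\mathbb R,\ \alpha_j=\overline{\alpha_k}\Rightarrow s_j=\overline{s_k}\}$, and $G=\overline{\vartheta(S)}$; $\theta(\mathbb R)$ is dense in $G$. Let $a:\mathbb N\to\mathbb C$ and $\tau:\mathbb N\to\mathbb Z[\alpha,\alpha^{-1}]$ satisfy $\sum_k|a(k)|e^{\eta|\tau(k)|}<\infty$ for some $\eta>0$ ("exponential decay"). Fix finitely supported $\tau_k:\mathbb Z\to\mathbb Z$ with $\tau(k)=\sum_j\tau_k(j)\alpha^j$. Let $\widehat a(y)=|\alpha|^{-1}\sum_k a(k)e^{-2\pi i\tau(k)y}$ and $A(g)=|\alpha|^{-1}\sum_k a(k)\exp(-2\pi i\sum_j\tau_k(j)g(j))$, $g\in G$. $\mathcal S(f)$ denotes the zero set of $f$ counted with multiplicity, and for such a multiset $Z\subset\mathbb R$, $\overline d(Z)=\limsup_{L\to\infty}\frac{1}{2L}\#(Z\cap(-L,L))$ and $\underline d(Z)=\liminf_{L\to\infty}\frac{1}{2L}\#(Z\cap(-L,L))$.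 *)

theory Defs
  imports "HOL-Analysis.Analysis" "HOL-Computational_Algebra.Polynomial"
begin

definition hderiv :: "nat \<Rightarrow> (real \<Rightarrow> complex) \<Rightarrow> real \<Rightarrow> complex" where
  "hderiv n f = ((\<lambda>g x. vector_derivative g (at x)) ^^ n) f"

definition zero_mult :: "(real \<Rightarrow> complex) \<Rightarrow> real \<Rightarrow> enat" where
  "zero_mult f x = (if \<exists>n. hderiv n f x \<noteq> 0
                    then enat (LEAST n. hderiv n f x \<noteq> 0) else \<infinity>)"

definition zeros_in :: "(real \<Rightarrow> complex) \<Rightarrow> real \<Rightarrow> ennreal" where
  "zeros_in f L = (\<Sum>\<^sub>\<infinity>x\<in>{-L<..<L}. ennreal_of_enat (zero_mult f x))"

definition upper_zero_density :: "(real \<Rightarrow> complex) \<Rightarrow> ennreal" where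
  "upper_zero_density f = Limsup at_top (\<lambda>L::real. zeros_in f L / ennreal (2 * L))"

text \<open>e(z) = exp(2 pi i z): identifies T = R/Z with the unit circle (a homeomorphism).\<close>
definition e1 :: "complex \<Rightarrow> complex" where
  "e1 z = exp (2 * of_real pi * \<i> * z)"

end

theory Submission
  imports Defs "HOL-Computational_Algebra.Polynomial_Factorial"
begin

lemma rolle_step_pos:
  fixes g :: "nat \<Rightarrow> real \<Rightarrow> real" and m :: "real \<Rightarrow> nat"
  assumes ch: "\<And>n x. (g n has_real_derivative g (Suc n) x) (at x)"
  assumes fin: "finite Z"
  shows "(\<forall>z\<in>Z. 0 < m z \<and> (\<forall>j<m z. g j z = 0)) \<Longrightarrow>
    \<exists>Z' m'. finite Z' \<and> (\<forall>z\<in>Z'. \<exists>z1\<in>Z. \<exists>z2\<in>Z. z1 \<le> z \<and> z \<le> z2) \<and>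
       (\<forall>z\<in>Z'. \<forall>j<m' z. g (Suc j) z = 0) \<and> sum m Z \<le> sum m' Z' + 1"
  using fin
proof (induction Z rule: finite_linorder_max_induct)
  case empty
  show ?case by (rule exI[of _ "{}"]) auto
next
  case (insert b A)
  have mb: "0 < m b" "\<And>j. j < m b \<Longrightarrow> g j b = 0" using insert.prems by auto
  show ?case
  proof (cases "A = {}")
    case True
    show ?thesis
      apply (rule exI[of _ "{b}"], rule exI[of _ "\<lambda>z. m b - 1"])
      using True mb by auto
  next
    case False
    from insert.IH insert.prems obtain A' m' where
      A': "finite A'" "\<forall>z\<in>A'. \<exists>z1\<in>A. \<exists>z2\<in>A. z1 \<le> z \<and> z \<le> z2"
          "\<forall>z\<in>A'. \<forall>j<m' z. g (Suc j) z = 0" "sum m A \<le> sum m' A' + 1"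
      by auto
    define c where "c = Max A"
    have cA: "c \<in> A" using False insert.hyps(1) c_def by auto
    have cb: "c < b" using cA insert.hyps(2) by auto
    have gc: "g 0 c = 0" using insert.prems cA by auto
    have gb: "g 0 b = 0" using mb by auto
    have cont: "continuous_on {c..b} (g 0)"
      by (meson DERIV_isCont ch continuous_at_imp_continuous_on)
    obtain \<xi> where xi: "c < \<xi>" "\<xi> < b" "(g 0 has_real_derivative 0) (at \<xi>)"
      using Rolle[OF cb, of "g 0"] gc gb cont
      by (metis ch real_differentiable_def)
    have gxi: "g 1 \<xi> = 0" using DERIV_unique[OF ch[of 0 \<xi>] xi(3)] by simp
    have A'le: "\<forall>z\<in>A'. z \<le> c"
      using A'(2) insert.hyps(1) c_def by (meson Max_ge order.trans)
    define m'' where "m'' z = (if z = b then m b - 1 else if z = \<xi> then 1 else m' z)" for z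
    have nb: "b \<notin> A'" "\<xi> \<notin> A'" using A'le cb xi by force+
    have "sum m'' (insert b (insert \<xi> A')) = m'' b + m'' \<xi> + sum m'' A'"
      using nb A'(1) xi by auto
    also have "sum m'' A' = sum m' A'" using nb by (intro sum.cong) (auto simp: m''_def)
    finally have s: "sum m'' (insert b (insert \<xi> A')) = (m b - 1) + 1 + sum m' A'"
      using xi by (simp add: m''_def)
    show ?thesis
    proof (intro exI conjI)
      show "finite (insert b (insert \<xi> A'))" using A'(1) by auto
      show "\<forall>z\<in>insert b (insert \<xi> A'). \<exists>z1\<in>insert b A. \<exists>z2\<in>insert b A. z1 \<le> z \<and> z \<le> z2"
        using A'(2) cA xi cb by (auto intro: order.trans) (meson less_imp_le)+
      show "\<forall>z\<in>insert b (insert \<xi> A'). \<forall>j<m'' z. g (Suc j) z = 0"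
        using A'(3) mb gxi nb xi by (auto simp: m''_def)
      show "sum m (insert b A) \<le> sum m'' (insert b (insert \<xi> A')) + 1"
        using s A'(4) insert.hyps mb by auto
    qed
  qed
qed

lemma rolle_step:
  fixes g :: "nat \<Rightarrow> real \<Rightarrow> real" and m :: "real \<Rightarrow> nat"
  assumes ch: "\<And>n x. (g n has_real_derivative g (Suc n) x) (at x)"
  assumes fin: "finite Z" and sub: "Z \<subseteq> {a..b}" and zer: "\<And>z j. z \<in> Z \<Longrightarrow> j < m z \<Longrightarrow> g j z = 0"
  shows "\<exists>Z' m'. finite Z' \<and> Z' \<subseteq> {a..b} \<and>
       (\<forall>z\<in>Z'. \<forall>j<m' z. g (Suc j) z = 0) \<and> sum m Z \<le> sum m' Z' + 1"
proof -
  define Z1 where "Z1 = {z\<in>Z. 0 < m z}"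
  have f1: "finite Z1" using fin Z1_def by auto
  have s: "sum m Z = sum m Z1"
    unfolding Z1_def by (rule sum.mono_neutral_right[OF fin]) auto
  obtain Z' m' where Z': "finite Z'" "\<forall>z\<in>Z'. \<exists>z1\<in>Z1. \<exists>z2\<in>Z1. z1 \<le> z \<and> z \<le> z2"
       "\<forall>z\<in>Z'. \<forall>j<m' z. g (Suc j) z = 0" "sum m Z1 \<le> sum m' Z' + 1"
  proof -
    have "\<forall>z\<in>Z1. 0 < m z \<and> (\<forall>j<m z. g j z = 0)" using zer unfolding Z1_def by auto
    from rolle_step_pos[OF ch f1 this] show ?thesis using that by blast
  qed
  have "Z' \<subseteq> {a..b}"
  proof
    fix z assume "z \<in> Z'"
    then obtain z1 z2 where "z1 \<in> Z1" "z2 \<in> Z1" "z1 \<le> z" "z \<le> z2" using Z'(2) by blast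
    then show "z \<in> {a..b}" using sub unfolding Z1_def by force
  qed
  then show ?thesis using Z' s by auto
qed

lemma rolle_iter:
  fixes g :: "nat \<Rightarrow> real \<Rightarrow> real" and m :: "real \<Rightarrow> nat"
  assumes ch: "\<And>n x. (g n has_real_derivative g (Suc n) x) (at x)"
  assumes fin: "finite Z" and sub: "Z \<subseteq> {a..b}" and zer: "\<And>z j. z \<in> Z \<Longrightarrow> j < m z \<Longrightarrow> g j z = 0"
  shows "\<exists>Z' m'. finite Z' \<and> Z' \<subseteq> {a..b} \<and>
       (\<forall>z\<in>Z'. \<forall>j<m' z. g (k + j) z = 0) \<and> sum m Z \<le> sum m' Z' + k"
proof (induction k)
  case 0
  then show ?case using fin sub zer by (intro exI[of _ Z] exI[of _ m]) auto
next
  case (Suc k)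
  then obtain Z' m' where Z': "finite Z'" "Z' \<subseteq> {a..b}"
       "\<forall>z\<in>Z'. \<forall>j<m' z. g (k + j) z = 0" "sum m Z \<le> sum m' Z' + k" by blast
  have ch': "\<And>n x. ((\<lambda>x. g (k + n) x) has_real_derivative g (k + Suc n) x) (at x)"
    using ch by (metis add_Suc_right)
  obtain Z'' m'' where Z'': "finite Z''" "Z'' \<subseteq> {a..b}"
       "\<forall>z\<in>Z''. \<forall>j<m'' z. g (k + Suc j) z = 0" "sum m' Z' \<le> sum m'' Z'' + 1"
    using rolle_step[of "\<lambda>n. g (k+n)", OF ch' Z'(1,2), of m'] Z'(3) by auto
  show ?case
    by (rule exI[of _ Z''], rule exI[of _ m'']) (use Z'' Z'(4) in auto)
qed

lemma pderiv_root_power: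
  fixes p :: "real poly"
  assumes "[:-z,1:] ^ Suc k dvd p"
  shows "[:-z,1:] ^ k dvd pderiv p"
proof -
  obtain q where q: "p = [:-z,1:] ^ Suc k * q" using assms by blast
  have "pderiv p = [:- z, 1:] ^ Suc k * pderiv q + smult (of_nat (Suc k)) (q * [:- z, 1:] ^ k)"
    unfolding q by (rule lemma_order_pderiv1)
  also have "[:-z,1:] ^ k dvd \<dots>"
  proof (rule dvd_add)
    show "[:- z, 1:] ^ k dvd [:- z, 1:] ^ Suc k * pderiv q"
      by (rule dvd_mult2, rule le_imp_power_dvd) simp
    show "[:- z, 1:] ^ k dvd smult (of_nat (Suc k)) (q * [:- z, 1:] ^ k)"
      by (intro dvd_smult) simp
  qed
  finally show ?thesis .
qed

lemma higher_pderiv_root: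
  fixes p :: "real poly"
  assumes "[:-z,1:] ^ k dvd p" "j < k"
  shows "poly ((pderiv ^^ j) p) z = 0"
proof -
  have "[:-z,1:] ^ (k - i) dvd (pderiv ^^ i) p" if "i \<le> k" for i
    using that
  proof (induction i)
    case 0 then show ?case using assms by simp
  next
    case (Suc i)
    then have "[:-z,1:] ^ Suc (k - Suc i) dvd (pderiv ^^ i) p"
      by (metis Suc_diff_Suc Suc_le_lessD less_imp_le_nat)
    then show ?case using pderiv_root_power by simp
  qed
  from this[of j] assms(2) have "[:-z,1:] ^ Suc (k - Suc j) dvd (pderiv ^^ j) p"
    by (simp add: Suc_diff_Suc)
  then have "[:-z,1:] dvd (pderiv ^^ j) p" by (meson dvd_power dvd_trans zero_less_Suc)
  then show ?thesis by (simp add: poly_eq_0_iff_dvd)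
qed

lemma hermite_bound:
  fixes g :: "nat \<Rightarrow> real \<Rightarrow> real" and m :: "real \<Rightarrow> nat"
  assumes ch: "\<And>n x. (g n has_real_derivative g (Suc n) x) (at x)"
  assumes fin: "finite Z" and sub: "Z \<subseteq> {a..b}" and zer: "\<And>z j. z \<in> Z \<Longrightarrow> j < m z \<Longrightarrow> g j z = 0"
  assumes x: "x \<in> {a..b}" and S: "\<And>t. t \<in> {a..b} \<Longrightarrow> \<bar>g (sum m Z) t\<bar> \<le> S"
  shows "\<bar>g 0 x\<bar> \<le> S * (b - a) ^ sum m Z / fact (sum m Z)"
proof (cases "g 0 x = 0")
  case True
  have "0 \<le> S" using S[of x] x by auto
  moreover have "0 \<le> b - a" using x by auto
  ultimately show ?thesis using True by simp
next
  case False
  define N where "N = sum m Z"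
  define Z1 where "Z1 = {z\<in>Z. 0 < m z}"
  have f1: "finite Z1" using fin Z1_def by auto
  have sN: "N = sum m Z1"
    unfolding Z1_def N_def by (rule sum.mono_neutral_right[OF fin]) auto
  have xZ1: "x \<notin> Z1" using False zer unfolding Z1_def by auto
  define \<omega> where "\<omega> = (\<Prod>z\<in>Z1. [:-z,1:] ^ m z)"
  have monic: "lead_coeff \<omega> = 1" unfolding \<omega>_def by (simp add: lead_coeff_prod lead_coeff_power)
  have degw: "degree \<omega> = N"
    unfolding \<omega>_def sN by (subst degree_prod_sum_eq) (auto simp: degree_power_eq)
  have wz: "poly ((pderiv ^^ j) \<omega>) z = 0" if "z \<in> Z1" "j < m z" for z j
  proof (rule higher_pderiv_root[OF _ that(2)])
    show "[:- z, 1:] ^ m z dvd \<omega>" unfolding \<omega>_def using that(1) f1 by (intro dvd_prodI) auto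
  qed
  have wN: "(pderiv ^^ N) \<omega> = [:fact N:]"
  proof -
    have d0: "degree ((pderiv ^^ N) \<omega>) = 0" by (simp add: degree_higher_pderiv degw)
    have "coeff ((pderiv ^^ N) \<omega>) 0 = pochhammer 1 N * coeff \<omega> N"
      by (simp add: coeff_higher_pderiv)
    also have "\<dots> = fact N" using monic degw by (simp add: pochhammer_fact)
    finally show ?thesis using d0 by (metis degree_eq_zeroE coeff_pCons_0)
  qed
  have wx: "poly \<omega> x \<noteq> 0" unfolding \<omega>_def using xZ1 f1 by (auto simp: poly_prod)
  have wxb: "\<bar>poly \<omega> x\<bar> \<le> (b - a) ^ N"
  proof -
    have "\<bar>poly \<omega> x\<bar> = (\<Prod>z\<in>Z1. \<bar>x - z\<bar> ^ m z)"
      unfolding \<omega>_def by (simp add: poly_prod abs_prod power_abs)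
    also have "\<dots> \<le> (\<Prod>z\<in>Z1. (b - a) ^ m z)"
      using sub x unfolding Z1_def by (intro prod_mono) (force intro!: power_mono)
    also have "\<dots> = (b - a) ^ N" using sN by (simp add: power_sum)
    finally show ?thesis .
  qed
  define K where "K = g 0 x / poly \<omega> x"
  define \<phi> where "\<phi> n t = g n t - K * poly ((pderiv ^^ n) \<omega>) t" for n t
  have chp: "(\<phi> n has_real_derivative \<phi> (Suc n) t) (at t)" for n t
    unfolding \<phi>_def by (auto intro!: derivative_eq_intros ch simp: poly_DERIV)
  define m2 where "m2 z = (if z = x then 1 else m z)" for z
  have zer2: "\<phi> j z = 0" if "z \<in> insert x Z1" "j < m2 z" for z j
  proof (cases "z = x")
    case True then show ?thesis using that by (simp add: m2_def \<phi>_def K_def wx)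
  next
    case False then show ?thesis using that zer wz unfolding m2_def \<phi>_def Z1_def by auto
  qed
  have s2: "sum m2 (insert x Z1) = N + 1"
  proof -
    have "sum m2 Z1 = sum m Z1" using xZ1 by (intro sum.cong) (auto simp: m2_def)
    then show ?thesis using xZ1 f1 sN by (simp add: m2_def)
  qed
  obtain Z' m' where Z': "finite Z'" "Z' \<subseteq> {a..b}"
       "\<forall>z\<in>Z'. \<forall>j<m' z. \<phi> (N + j) z = 0" "sum m2 (insert x Z1) \<le> sum m' Z' + N"
  proof -
    have "insert x Z1 \<subseteq> {a..b}" using sub x unfolding Z1_def by auto
    from rolle_iter[of \<phi>, OF chp _ this, of m2 N] f1 zer2 show ?thesis using that by blast
  qed
  have "sum m' Z' \<noteq> 0" using Z'(4) s2 by auto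
  then obtain \<xi> where xi: "\<xi> \<in> Z'" "0 < m' \<xi>" by (metis gr0I sum.neutral)
  have "\<phi> N \<xi> = 0" using Z'(3) xi by (metis add_0_right)
  then have gK: "g N \<xi> = K * fact N" unfolding \<phi>_def wN by simp
  have "\<bar>K\<bar> * fact N \<le> S" using S[of \<xi>] Z'(2) xi gK unfolding N_def by (auto simp: abs_mult)
  then have Kb: "\<bar>K\<bar> \<le> S / fact N" by (simp add: field_simps)
  have "g 0 x = K * poly \<omega> x" using wx K_def by simp
  then have "\<bar>g 0 x\<bar> = \<bar>K\<bar> * \<bar>poly \<omega> x\<bar>" by (simp add: abs_mult)
  also have "\<dots> \<le> (S / fact N) * (b - a) ^ N"
    by (intro mult_mono Kb wxb) (use Kb in auto)
  finally show ?thesis unfolding N_def by simp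
qed


lemma chain_re:
  assumes "\<And>n x. (F n has_vector_derivative F (Suc n) x) (at x)"
  shows "((\<lambda>x. Re (F n x)) has_real_derivative Re (F (Suc n) x)) (at x)"
  using bounded_linear.has_vector_derivative[OF bounded_linear_Re assms]
  by (simp add: has_real_derivative_iff_has_vector_derivative)

lemma chain_im:
  assumes "\<And>n x. (F n has_vector_derivative F (Suc n) x) (at x)"
  shows "((\<lambda>x. Im (F n x)) has_real_derivative Im (F (Suc n) x)) (at x)"
  using bounded_linear.has_vector_derivative[OF bounded_linear_Im assms]
  by (simp add: has_real_derivative_iff_has_vector_derivative)

lemma count_window:
  fixes F :: "nat \<Rightarrow> real \<Rightarrow> complex" and mm :: "real \<Rightarrow> nat"
  assumes ch: "\<And>n x. (F n has_vector_derivative F (Suc n) x) (at x)"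
  and bd: "\<And>n x. cmod (F n x) \<le> C * fact n * r ^ n"
  and r: "r > 0" and h: "h > 0" "h * r \<le> 1/2"
  and x: "x \<in> {u..u+h}" and m0: "m0 \<le> cmod (F 0 x)" "0 < m0"
  and fin: "finite Z" and sub: "Z \<subseteq> {u..u+h}" and zer: "\<And>z j. z \<in> Z \<Longrightarrow> j < mm z \<Longrightarrow> F j z = 0"
  shows "real (sum mm Z) \<le> 2 * C / m0"
proof -
  define N where "N = sum mm Z"
  define S where "S = C * fact N * r ^ N"
  have key: "S * (u + h - u) ^ N / fact N \<le> C * (1/2) ^ N"
  proof -
    have C0: "0 \<le> C" using bd[of 0 x] m0 by auto
    have "S * (u + h - u) ^ N / fact N = C * (h * r) ^ N" unfolding S_def
      by (simp add: power_mult_distrib field_simps)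
    also have "\<dots> \<le> C * (1/2) ^ N"
      using h r C0 by (intro mult_left_mono power_mono) auto
    finally show ?thesis .
  qed
  have re: "\<bar>Re (F 0 x)\<bar> \<le> C * (1/2) ^ N"
  proof -
    have "\<bar>(\<lambda>n t. Re (F n t)) 0 x\<bar> \<le> S * (u + h - u) ^ sum mm Z / fact (sum mm Z)"
    proof (rule hermite_bound[of "\<lambda>n t. Re (F n t)", OF chain_re[of F, OF ch] fin sub _ x])
      show "\<And>z j. z \<in> Z \<Longrightarrow> j < mm z \<Longrightarrow> Re (F j z) = 0" using zer by simp
      show "\<And>t. t \<in> {u..u + h} \<Longrightarrow> \<bar>Re (F (sum mm Z) t)\<bar> \<le> S"
        using bd abs_Re_le_cmod order.trans unfolding S_def N_def by blast
    qed
    then show ?thesis using key unfolding N_def by simp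
  qed
  have im: "\<bar>Im (F 0 x)\<bar> \<le> C * (1/2) ^ N"
  proof -
    have "\<bar>(\<lambda>n t. Im (F n t)) 0 x\<bar> \<le> S * (u + h - u) ^ sum mm Z / fact (sum mm Z)"
    proof (rule hermite_bound[of "\<lambda>n t. Im (F n t)", OF chain_im[of F, OF ch] fin sub _ x])
      show "\<And>z j. z \<in> Z \<Longrightarrow> j < mm z \<Longrightarrow> Im (F j z) = 0" using zer by simp
      show "\<And>t. t \<in> {u..u + h} \<Longrightarrow> \<bar>Im (F (sum mm Z) t)\<bar> \<le> S"
        using bd abs_Im_le_cmod order.trans unfolding S_def N_def by blast
    qed
    then show ?thesis using key unfolding N_def by simp
  qed
  have "m0 \<le> 2 * C * (1/2) ^ N"
    using m0(1) cmod_le[of "F 0 x"] re im by linarith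
  then have "m0 * 2 ^ N \<le> 2 * C" by (simp add: field_simps power_one_over)
  moreover have "real N \<le> 2 ^ N"
    by (metis of_nat_le_iff of_nat_numeral of_nat_power less_imp_le_nat less_exp)
  ultimately have "m0 * real N \<le> 2 * C"
    using m0(2) by (meson mult_left_mono less_imp_le order.trans)
  then show ?thesis unfolding N_def using m0(2) by (simp add: field_simps)
qed

lemma hderiv_chain:
  assumes ch: "\<And>n x. (F n has_vector_derivative F (Suc n) x) (at x)" and f: "F 0 = f"
  shows "hderiv n f = F n"
proof (induction n)
  case 0 then show ?case using f by (simp add: hderiv_def)
next
  case (Suc n)
  have "hderiv (Suc n) f = (\<lambda>x. vector_derivative (hderiv n f) (at x))"
    by (simp add: hderiv_def)
  also have "\<dots> = F (Suc n)" using Suc vector_derivative_at[OF ch] by auto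
  finally show ?case .
qed


theorem density_bound:
  fixes F :: "nat \<Rightarrow> real \<Rightarrow> complex"
  assumes ch: "\<And>n x. (F n has_vector_derivative F (Suc n) x) (at x)"
  and bd: "\<And>n x. cmod (F n x) \<le> C * fact n * r ^ n"
  and r: "r > 0" and h: "h > 0" "h * r \<le> 1/2" and m0: "0 < m0"
  and good: "\<And>u. \<exists>x\<in>{u..u+h}. m0 \<le> cmod (F 0 x)"
  shows "upper_zero_density (F 0) < top"
proof -
  define f where "f = F 0"
  have hd: "hderiv n f = F n" for n using hderiv_chain[of F, OF ch] f_def by simp
  define M where "M = 2 * C / m0"
  have fin_mult: "\<exists>n. F n z \<noteq> 0" for z
  proof (rule ccontr)
    assume "\<not> (\<exists>n. F n z \<noteq> 0)"
    then have z0: "\<And>n. F n z = 0" by auto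
    obtain x where x: "x \<in> {z..z+h}" "m0 \<le> cmod (F 0 x)" using good by blast
    define N where "N = nat \<lceil>M\<rceil> + 1"
    have "real (sum (\<lambda>_. N) {z}) \<le> 2 * C / m0"
      by (rule count_window[of F, OF ch bd r h x(1) x(2) m0]) (use z0 h in auto)
    then show False unfolding N_def M_def by simp linarith
  qed
  define k where "k z = (LEAST n. F n z \<noteq> 0)" for z
  have zm: "zero_mult f z = enat (k z)" for z
    using fin_mult[of z] unfolding zero_mult_def hd k_def by auto
  have kz: "F j z = 0" if "j < k z" for j z
    using not_less_Least[of j "\<lambda>n. F n z \<noteq> 0"] that unfolding k_def by auto
  have win: "sum (\<lambda>x. ennreal_of_enat (zero_mult f x)) Fs \<le> ennreal M"
    if "finite Fs" "Fs \<subseteq> {u..u+h}" for Fs u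
  proof -
    obtain x where x: "x \<in> {u..u+h}" "m0 \<le> cmod (F 0 x)" using good by blast
    have "real (sum k Fs) \<le> M" unfolding M_def
      by (rule count_window[of F, OF ch bd r h x(1) x(2) m0 that]) (use kz in auto)
    moreover have "sum (\<lambda>x. ennreal_of_enat (zero_mult f x)) Fs = ennreal (real (sum k Fs))"
      by (simp add: zm ennreal_of_enat_enat ennreal_of_nat_eq_real_of_nat)
    ultimately show ?thesis by (simp add: ennreal_leI)
  qed
  have M0: "0 \<le> M"
  proof -
    have "cmod (F 0 0) \<le> C" using bd[of 0 0] by simp
    then have "0 \<le> C" using norm_ge_zero order.trans by blast
    then show ?thesis unfolding M_def using m0 by simp
  qed
  have zL: "zeros_in f L \<le> ennreal ((2 * L / h + 1) * M)" if L: "L > 0" for L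
  proof -
    define K where "K = nat \<lceil>2 * L / h\<rceil>"
    define idx where "idx x = nat \<lfloor>(x + L) / h\<rfloor>" for x
    show ?thesis unfolding zeros_in_def
    proof (rule infsum_le_finite_sums)
      show "(\<lambda>x. ennreal_of_enat (zero_mult f x)) summable_on {- L<..<L}"
        by (rule nonneg_summable_on_complete) simp
      fix Fs assume Fs: "finite Fs" "Fs \<subseteq> {- L<..<L}"
      have img: "idx ` Fs \<subseteq> {..<K}"
      proof
        fix i assume "i \<in> idx ` Fs"
        then obtain x where x: "x \<in> Fs" "i = idx x" by auto
        have "(x + L) / h < 2 * L / h" using Fs x h by (auto simp: divide_strict_right_mono)
        then have "\<lfloor>(x + L) / h\<rfloor> < \<lceil>2 * L / h\<rceil>" by linarith
        moreover have "0 \<le> \<lfloor>(x + L) / h\<rfloor>" using Fs x h by auto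
        ultimately show "i \<in> {..<K}" unfolding x(2) idx_def K_def using L h by auto
      qed
      have "sum (\<lambda>x. ennreal_of_enat (zero_mult f x)) Fs =
            (\<Sum>i<K. sum (\<lambda>x. ennreal_of_enat (zero_mult f x)) {x\<in>Fs. idx x = i})"
        by (rule sum.group[symmetric]) (use Fs img in auto)
      also have "\<dots> \<le> (\<Sum>i<K. ennreal M)"
      proof (rule sum_mono)
        fix i assume "i \<in> {..<K}"
        have "{x\<in>Fs. idx x = i} \<subseteq> {(-L + i * h)..(-L + i * h) + h}"
        proof
          fix x assume x: "x \<in> {x\<in>Fs. idx x = i}"
          have l0: "0 \<le> \<lfloor>(x + L) / h\<rfloor>" using Fs x h by auto
          have fi: "\<lfloor>(x + L) / h\<rfloor> = int i" using x l0 unfolding idx_def by auto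
          have "real i \<le> (x + L) / h" "(x + L) / h < real i + 1"
            using fi by linarith+
          then have "real i * h \<le> x + L" "x + L < (real i + 1) * h"
            using h by (auto simp: field_simps)
          then show "x \<in> {(-L + i * h)..(-L + i * h) + h}" by (auto simp: algebra_simps)
        qed
        then show "sum (\<lambda>x. ennreal_of_enat (zero_mult f x)) {x\<in>Fs. idx x = i} \<le> ennreal M"
          using win Fs by auto
      qed
      also have "\<dots> = ennreal (real K * M)" using M0 by (simp add: ennreal_mult ennreal_of_nat_eq_real_of_nat)
      also have "\<dots> \<le> ennreal ((2 * L / h + 1) * M)"
      proof (rule ennreal_leI, rule mult_right_mono[OF _ M0])
        have "0 \<le> 2 * L / h" using L h by auto
        then have "real (nat \<lceil>2 * L / h\<rceil>) = of_int \<lceil>2 * L / h\<rceil>" by simp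
        then show "real K \<le> 2 * L / h + 1" unfolding K_def by linarith
      qed
      finally show "sum (\<lambda>x. ennreal_of_enat (zero_mult f x)) Fs \<le> ennreal ((2 * L / h + 1) * M)" .
    qed
  qed
  have ev: "\<forall>\<^sub>F L in at_top. zeros_in f L / ennreal (2 * L) \<le> ennreal (3 * M / (2 * h))"
    using eventually_ge_at_top[of h]
  proof eventually_elim
    case (elim L)
    then have L: "L > 0" using h by auto
    have "zeros_in f L / ennreal (2 * L) \<le> ennreal ((2 * L / h + 1) * M) / ennreal (2 * L)"
      by (intro divide_right_mono_ennreal zL L)
    also have "\<dots> = ennreal ((2 * L / h + 1) * M / (2 * L))"
      using L M0 h by (intro divide_ennreal) auto
    also have "\<dots> \<le> ennreal (3 * M / (2 * h))"
    proof (rule ennreal_leI)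
      have "(2 * L / h + 1) * M \<le> (3 * L / h) * M"
        using elim h M0 by (intro mult_right_mono) (auto simp: field_simps)
      then show "(2 * L / h + 1) * M / (2 * L) \<le> 3 * M / (2 * h)"
        using L h by (simp add: field_simps)
    qed
    finally show ?case .
  qed
  have "upper_zero_density f \<le> ennreal (3 * M / (2 * h))"
    unfolding upper_zero_density_def by (rule Limsup_bounded[OF ev])
  then show ?thesis unfolding f_def by (simp add: order_le_less_trans)
qed


lemma series_vector_deriv:
  fixes u :: "nat \<Rightarrow> real \<Rightarrow> complex"
  assumes d: "\<And>k x. (u k has_vector_derivative u' k x) (at x)"
  and b: "\<And>k x. norm (u' k x) \<le> M k" and sM: "summable M"
  and s0: "\<And>x. summable (\<lambda>k. u k x)"
  shows "((\<lambda>x. \<Sum>k. u k x) has_vector_derivative (\<Sum>k. u' k x)) (at x)"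
proof -
  have ul: "uniform_limit UNIV (\<lambda>n x. \<Sum>i<n. u' i x) (\<lambda>x. \<Sum>i. u' i x) sequentially"
    by (rule Weierstrass_m_test[OF _ sM]) (use b in auto)
  have "\<exists>g. \<forall>x\<in>UNIV. (\<lambda>n. u n x) sums (g x) \<and>
      (g has_derivative (\<lambda>h. h *\<^sub>R (\<Sum>i. u' i x))) (at x within UNIV)"
  proof (rule has_derivative_series[where f' = "\<lambda>i x h. h *\<^sub>R u' i x"])
    show "convex (UNIV :: real set)" by simp
    show "\<And>n x. x \<in> UNIV \<Longrightarrow> (u n has_derivative (\<lambda>h. h *\<^sub>R u' n x)) (at x within UNIV)"
      using d unfolding has_vector_derivative_def by auto
    show "\<forall>\<^sub>F n in sequentially. \<forall>x\<in>UNIV. \<forall>h. norm ((\<Sum>i<n. h *\<^sub>R u' i x) - h *\<^sub>R (\<Sum>i. u' i x)) \<le> e * norm h"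
      if e: "e > 0" for e
    proof -
      from uniform_limitD[OF ul e] have "\<forall>\<^sub>F n in sequentially. \<forall>x\<in>UNIV. dist (\<Sum>i<n. u' i x) (\<Sum>i. u' i x) < e" .
      then show ?thesis
      proof eventually_elim
        case (elim n)
        show ?case
        proof (intro ballI allI)
          fix x :: real and h :: real assume "x \<in> UNIV"
          have "norm ((\<Sum>i<n. h *\<^sub>R u' i x) - h *\<^sub>R (\<Sum>i. u' i x)) = \<bar>h\<bar> * norm ((\<Sum>i<n. u' i x) - (\<Sum>i. u' i x))"
            by (simp add: scaleR_sum_right[symmetric] scaleR_diff_right[symmetric])
          also have "\<dots> \<le> \<bar>h\<bar> * e" using elim by (intro mult_left_mono) (auto simp: dist_norm less_imp_le)
          finally show "norm ((\<Sum>i<n. h *\<^sub>R u' i x) - h *\<^sub>R (\<Sum>i. u' i x)) \<le> e * norm h" by (simp add: mult.commute)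
        qed
      qed
    qed
    show "(0::real) \<in> UNIV" by simp
    show "(\<lambda>n. u n 0) sums (\<Sum>k. u k 0)" using s0 by (simp add: summable_sums)
  qed
  then obtain g where g: "\<And>x. (\<lambda>n. u n x) sums (g x)"
     "\<And>x. (g has_derivative (\<lambda>h. h *\<^sub>R (\<Sum>i. u' i x))) (at x)" by auto
  have "g = (\<lambda>x. \<Sum>k. u k x)" using g(1) by (auto simp: sums_iff)
  then show ?thesis using g(2) unfolding has_vector_derivative_def by auto
qed

definition ph :: "real \<Rightarrow> real \<Rightarrow> complex" where
  "ph t s = exp (- 2 * of_real pi * \<i> * of_real (t * s))"

lemma cmod_ph [simp]: "cmod (ph t s) = 1"
  unfolding ph_def by (simp add: norm_exp_eq_Re)

lemma ph_add: "ph t (x + y) = ph t x * ph t y"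
  unfolding ph_def by (simp add: algebra_simps exp_add[symmetric])

lemma ph_deriv: "(ph t has_vector_derivative (- 2 * of_real pi * \<i> * of_real t) * ph t s) (at s)"
proof -
  have "((\<lambda>z. exp (- 2 * of_real pi * \<i> * of_real t * z)) has_field_derivative
        (- 2 * of_real pi * \<i> * of_real t) * exp (- 2 * of_real pi * \<i> * of_real t * of_real s)) (at (of_real s))"
    by (auto intro!: derivative_eq_intros)
  from has_vector_derivative_real_field[OF this]
  show ?thesis unfolding ph_def by (simp add: mult.assoc mult.commute mult.left_commute)
qed

definition FS :: "(nat \<Rightarrow> complex) \<Rightarrow> (nat \<Rightarrow> real) \<Rightarrow> nat \<Rightarrow> (nat \<Rightarrow> complex) \<Rightarrow> real \<Rightarrow> complex" where
  "FS a \<tau> n w s = (\<Sum>k. a k * w k * (- 2 * of_real pi * \<i> * of_real (\<tau> k)) ^ n * ph (\<tau> k) s)"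

lemma pow_le_fact_exp:
  fixes x :: real assumes "0 \<le> x"
  shows "x ^ n \<le> fact n * exp x"
proof -
  obtain t where t: "\<bar>t\<bar> \<le> \<bar>x\<bar>" "exp x = (\<Sum>m<Suc n. x ^ m / fact m) + exp t / fact (Suc n) * x ^ Suc n"
    using Maclaurin_exp_le by blast
  have "x ^ n / fact n \<le> (\<Sum>m<Suc n. x ^ m / fact m)"
    by (rule member_le_sum) (use assms in auto)
  moreover have "0 \<le> exp t / fact (Suc n) * x ^ Suc n" using assms by auto
  ultimately have "x ^ n / fact n \<le> exp x" using t(2) by linarith
  then show ?thesis by (simp add: field_simps)
qed

locale decay =
  fixes a :: "nat \<Rightarrow> complex" and \<tau> :: "nat \<Rightarrow> real" and \<eta> :: real
  assumes eta: "\<eta> > 0" and sd: "summable (\<lambda>k. cmod (a k) * exp (\<eta> * \<bar>\<tau> k\<bar>))"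
begin

definition Cs where "Cs = (\<Sum>k. cmod (a k) * exp (\<eta> * \<bar>\<tau> k\<bar>))"

lemma term_bound:
  "cmod (a k) * (2 * pi * \<bar>\<tau> k\<bar>) ^ n \<le> fact n * (2 * pi / \<eta>) ^ n * (cmod (a k) * exp (\<eta> * \<bar>\<tau> k\<bar>))"
proof -
  have e: "2 * pi * \<bar>\<tau> k\<bar> = (2 * pi / \<eta>) * (\<eta> * \<bar>\<tau> k\<bar>)" using eta by (simp add: field_simps)
  have "(2 * pi * \<bar>\<tau> k\<bar>) ^ n = (2 * pi / \<eta>) ^ n * (\<eta> * \<bar>\<tau> k\<bar>) ^ n"
    unfolding e by (rule power_mult_distrib)
  also have "\<dots> \<le> (2 * pi / \<eta>) ^ n * (fact n * exp (\<eta> * \<bar>\<tau> k\<bar>))"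
    using eta by (intro mult_left_mono pow_le_fact_exp) auto
  finally have "cmod (a k) * (2 * pi * \<bar>\<tau> k\<bar>) ^ n \<le> cmod (a k) * ((2 * pi / \<eta>) ^ n * (fact n * exp (\<eta> * \<bar>\<tau> k\<bar>)))"
    by (rule mult_left_mono) simp
  then show ?thesis by (simp add: mult_ac)
qed

lemma summ_M: "summable (\<lambda>k. cmod (a k) * (2 * pi * \<bar>\<tau> k\<bar>) ^ n)"
proof (rule summable_comparison_test'[OF _ ])
  show "summable (\<lambda>k. fact n * (2 * pi / \<eta>) ^ n * (cmod (a k) * exp (\<eta> * \<bar>\<tau> k\<bar>)))"
    using sd by (intro summable_mult)
  show "\<And>k. norm (cmod (a k) * (2 * pi * \<bar>\<tau> k\<bar>) ^ n) \<le> fact n * (2 * pi / \<eta>) ^ n * (cmod (a k) * exp (\<eta> * \<bar>\<tau> k\<bar>))"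
    using term_bound by (simp add: abs_mult)
qed

lemma term_norm:
  assumes "cmod (w k) \<le> 1"
  shows "cmod (a k * w k * (- 2 * of_real pi * \<i> * of_real (\<tau> k)) ^ n * ph (\<tau> k) s) \<le> cmod (a k) * (2 * pi * \<bar>\<tau> k\<bar>) ^ n"
proof -
  have "cmod (- 2 * of_real pi * \<i> * of_real (\<tau> k)) = 2 * pi * \<bar>\<tau> k\<bar>"
    by (simp add: norm_mult)
  then have "cmod (a k * w k * (- 2 * of_real pi * \<i> * of_real (\<tau> k)) ^ n * ph (\<tau> k) s)
      = cmod (a k) * cmod (w k) * (2 * pi * \<bar>\<tau> k\<bar>) ^ n"
    by (simp add: norm_mult norm_power)
  also have "\<dots> \<le> cmod (a k) * 1 * (2 * pi * \<bar>\<tau> k\<bar>) ^ n"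
    using assms by (intro mult_right_mono mult_left_mono) auto
  finally show ?thesis by simp
qed

lemma summable_term:
  assumes "\<forall>k. cmod (w k) \<le> 1"
  shows "summable (\<lambda>k. a k * w k * (- 2 * of_real pi * \<i> * of_real (\<tau> k)) ^ n * ph (\<tau> k) s)"
  by (rule summable_comparison_test'[OF summ_M[of n]]) (use term_norm assms in auto)

lemma FS_bound:
  assumes "\<forall>k. cmod (w k) \<le> 1"
  shows "cmod (FS a \<tau> n w s) \<le> Cs * fact n * (2 * pi / \<eta>) ^ n"
proof -
  have "cmod (FS a \<tau> n w s) \<le> (\<Sum>k. cmod (a k * w k * (- 2 * of_real pi * \<i> * of_real (\<tau> k)) ^ n * ph (\<tau> k) s))"
    unfolding FS_def
    by (rule summable_norm) (rule summable_comparison_test'[OF summ_M[of n]], use term_norm assms in auto)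
  also have "\<dots> \<le> (\<Sum>k. cmod (a k) * (2 * pi * \<bar>\<tau> k\<bar>) ^ n)"
    by (intro suminf_le summ_M summable_comparison_test'[OF summ_M[of n]]) (use term_norm assms in auto)
  also have "\<dots> \<le> (\<Sum>k. fact n * (2 * pi / \<eta>) ^ n * (cmod (a k) * exp (\<eta> * \<bar>\<tau> k\<bar>)))"
    by (intro suminf_le summ_M summable_mult sd term_bound)
  also have "\<dots> = fact n * (2 * pi / \<eta>) ^ n * Cs"
    unfolding Cs_def by (rule suminf_mult[OF sd])
  finally show ?thesis by (simp add: mult_ac)
qed

lemma FS_chain:
  assumes "\<forall>k. cmod (w k) \<le> 1"
  shows "(FS a \<tau> n w has_vector_derivative FS a \<tau> (Suc n) w s) (at s)"
proof -
  have "((\<lambda>x. \<Sum>k. a k * w k * (- 2 * of_real pi * \<i> * of_real (\<tau> k)) ^ n * ph (\<tau> k) x) has_vector_derivative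
        (\<Sum>k. a k * w k * (- 2 * of_real pi * \<i> * of_real (\<tau> k)) ^ n * ((- 2 * of_real pi * \<i> * of_real (\<tau> k)) * ph (\<tau> k) s))) (at s)"
  proof (rule series_vector_deriv[where M = "\<lambda>k. cmod (a k) * (2 * pi * \<bar>\<tau> k\<bar>) ^ Suc n"])
    show "\<And>k x. ((\<lambda>x. a k * w k * (- 2 * complex_of_real pi * \<i> * complex_of_real (\<tau> k)) ^ n * ph (\<tau> k) x)
       has_vector_derivative a k * w k * (- 2 * complex_of_real pi * \<i> * complex_of_real (\<tau> k)) ^ n *
        ((- 2 * complex_of_real pi * \<i> * complex_of_real (\<tau> k)) * ph (\<tau> k) x)) (at x)"
      by (intro has_vector_derivative_mult_right ph_deriv)
    show "\<And>k x. cmod (a k * w k * (- 2 * complex_of_real pi * \<i> * complex_of_real (\<tau> k)) ^ n *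
            ((- 2 * complex_of_real pi * \<i> * complex_of_real (\<tau> k)) * ph (\<tau> k) x)) \<le> cmod (a k) * (2 * pi * \<bar>\<tau> k\<bar>) ^ Suc n"
      using term_norm[of w _ "Suc n"] assms by (simp add: mult_ac)
    show "summable (\<lambda>k. cmod (a k) * (2 * pi * \<bar>\<tau> k\<bar>) ^ Suc n)" by (rule summ_M)
    show "\<And>x. summable (\<lambda>k. a k * w k * (- 2 * complex_of_real pi * \<i> * complex_of_real (\<tau> k)) ^ n * ph (\<tau> k) x)"
      using summable_term assms by blast
  qed
  then show ?thesis unfolding FS_def by (simp add: mult_ac)
qed

lemma FS_shift:
  "FS a \<tau> n (\<lambda>k. w k * ph (\<tau> k) u) s = FS a \<tau> n w (u + s)"
  unfolding FS_def ph_add by (simp add: mult_ac)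

definition Tle where "Tle = {w :: nat \<Rightarrow> complex. \<forall>k. cmod (w k) \<le> 1}"

lemma FS_cont: "continuous_on Tle (\<lambda>w. FS a \<tau> n w s)"
proof -
  have ul: "uniform_limit Tle (\<lambda>N w. \<Sum>k<N. a k * w k * (- 2 * of_real pi * \<i> * of_real (\<tau> k)) ^ n * ph (\<tau> k) s)
        (\<lambda>w. \<Sum>k. a k * w k * (- 2 * of_real pi * \<i> * of_real (\<tau> k)) ^ n * ph (\<tau> k) s) sequentially"
    by (rule Weierstrass_m_test[OF _ summ_M[of n]]) (use term_norm in \<open>auto simp: Tle_def\<close>)
  have "continuous_on Tle (\<lambda>w. \<Sum>k<N. a k * w k * (- 2 * of_real pi * \<i> * of_real (\<tau> k)) ^ n * ph (\<tau> k) s)" for N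
    by (intro continuous_intros continuous_on_product_then_coordinatewise continuous_on_id)
  then show ?thesis unfolding FS_def
    by (intro uniform_limit_theorem[OF _ ul]) auto
qed

end


lemma fact_add_le: "fact (n + M) \<le> (fact n * fact M * 2 ^ (n + M) :: real)"
proof -
  have "fact n * fact (n + M - n) * ((n + M) choose n) = (fact (n + M) :: nat)"
    by (rule binomial_fact_lemma) simp
  then have e: "fact (n + M) = (fact n * fact M * ((n + M) choose n) :: nat)" by simp
  have "(n + M) choose n \<le> 2 ^ (n + M)" by (rule binomial_le_pow2)
  then have "fact n * fact M * ((n + M) choose n) \<le> (fact n * fact M * 2 ^ (n + M) :: nat)"
    by simp
  then have "real (fact (n + M)) \<le> real (fact n * fact M * 2 ^ (n + M))"
    unfolding e by (simp only: of_nat_le_iff)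
  then show ?thesis by (simp add: of_nat_mult)
qed

lemma zero_by_geom:
  fixes c K :: real
  assumes "\<And>M. M > 0 \<Longrightarrow> \<bar>c\<bar> \<le> K * (1/2) ^ M"
  shows "c = 0"
proof (rule ccontr)
  assume c: "c \<noteq> 0"
  have K: "K > 0"
  proof -
    have "0 < \<bar>c\<bar>" using c by simp
    also have "\<dots> \<le> K * (1/2) ^ 1" using assms[of 1] by simp
    finally show ?thesis by simp
  qed
  obtain M where M: "(1/2::real) ^ M < \<bar>c\<bar> / K" using real_arch_pow_inv[of "\<bar>c\<bar> / K" "1/2"] c K by auto
  have "(1/2::real) ^ Suc M \<le> (1/2) ^ M" by (simp add: power_decreasing)
  then have "K * (1/2) ^ Suc M < \<bar>c\<bar>" using M K by (simp add: field_simps)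
  then show False using assms[of "Suc M"] by simp
qed

lemma deriv_zero_open:
  fixes F :: "nat \<Rightarrow> real \<Rightarrow> complex"
  assumes ch: "\<And>n x. (F n has_vector_derivative F (Suc n) x) (at x)"
  and S: "open S" and z: "\<And>x. x \<in> S \<Longrightarrow> F 0 x = 0"
  shows "x \<in> S \<Longrightarrow> F n x = 0"
proof (induction n arbitrary: x)
  case 0 then show ?case using z by simp
next
  case (Suc n)
  have "((\<lambda>_. 0) has_vector_derivative 0) (at x)" by (rule has_vector_derivative_const)
  then have "(F n has_vector_derivative 0) (at x)"
    by (rule has_vector_derivative_transform_within_open[OF _ S Suc.prems]) (use Suc.IH in auto)
  then show ?case using vector_derivative_unique_at[OF ch[of n x]] by simp
qed

lemma taylor_small:
  fixes g :: "nat \<Rightarrow> real \<Rightarrow> real"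
  assumes ch: "\<And>n x. (g n has_real_derivative g (Suc n) x) (at x)"
  and z: "\<And>m. g m x = 0" and M: "M > 0"
  shows "\<exists>t. \<bar>g 0 y\<bar> \<le> \<bar>g M t\<bar> / fact M * \<bar>y - x\<bar> ^ M"
proof (cases "y = x")
  case True then show ?thesis using z by auto
next
  case False
  obtain t where t: "g 0 y = (\<Sum>m<M. (g m x / fact m) * (y - x)^m) + (g M t / fact M) * (y - x)^M"
    using Taylor[of M g "g 0" "min x y" "max x y" x y] ch M False by auto
  have "g 0 y = (g M t / fact M) * (y - x)^M" using t z by simp
  then have "\<bar>g 0 y\<bar> = \<bar>g M t\<bar> / fact M * \<bar>y - x\<bar> ^ M" by (simp add: abs_mult power_abs)
  then show ?thesis by auto
qed

lemma identity_chain: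
  fixes F :: "nat \<Rightarrow> real \<Rightarrow> complex"
  assumes ch: "\<And>n x. (F n has_vector_derivative F (Suc n) x) (at x)"
  and bd: "\<And>n x. cmod (F n x) \<le> C * fact n * r ^ n" and r: "r > 0"
  and zero: "\<And>x. x \<in> {u<..<v} \<Longrightarrow> F 0 x = 0" and uv: "u < v"
  shows "F 0 y = 0"
proof -
  have "cmod (F 0 0) \<le> C" using bd[of 0 0] by simp
  then have C0: "0 \<le> C" using norm_ge_zero order.trans by blast
  define Z where "Z = {x. \<forall>n. F n x = 0}"
  have cont: "continuous_on UNIV (F n)" for n
    using ch by (meson continuous_at_imp_continuous_on has_vector_derivative_continuous)
  have "closed Z"
  proof -
    have "Z = (\<Inter>n. {x. F n x = 0})" unfolding Z_def by auto
    moreover have "closed {x. F n x = 0}" for n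
      using cont[of n] by (intro closed_Collect_eq) (auto intro: continuous_intros)
    ultimately show ?thesis by auto
  qed
  moreover have "open Z"
  proof (unfold open_dist, intro ballI)
    fix x assume x: "x \<in> Z"
    define \<delta> where "\<delta> = 1 / (4 * r)"
    have \<delta>: "\<delta> > 0" "r * \<delta> = 1/4" using r unfolding \<delta>_def by auto
    have "y \<in> Z" if y: "dist y x < \<delta>" for y
    proof -
      have "F n y = 0" for n
      proof -
        define K where "K = C * fact n * 2 ^ n * r ^ n"
        have gen: "\<bar>Q (F n y)\<bar> = 0" if Q: "bounded_linear Q" "\<And>z. \<bar>Q z\<bar> \<le> cmod z" for Q :: "complex \<Rightarrow> real"
        proof -
          have chq: "((\<lambda>t. Q (F (n + m) t)) has_real_derivative Q (F (n + Suc m) t)) (at t)" for m t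
            using bounded_linear.has_vector_derivative[OF Q(1) ch[of "n+m" t]]
            by (simp add: has_real_derivative_iff_has_vector_derivative)
          have zq: "Q (F (n + m) x) = 0" for m
            using x Q(1) unfolding Z_def by (simp add: linear_simps)
          have "\<bar>Q (F n y)\<bar> \<le> K * (1/2) ^ M" if M: "M > 0" for M
          proof -
            obtain t where t: "\<bar>Q (F (n+0) y)\<bar> \<le> \<bar>Q (F (n+M) t)\<bar> / fact M * \<bar>y - x\<bar> ^ M"
              using taylor_small[of "\<lambda>m t. Q (F (n + m) t)", OF _ zq M, of y] chq by (metis add_Suc_right)
            have "\<bar>Q (F (n+M) t)\<bar> \<le> C * fact (n+M) * r ^ (n+M)" using Q(2) bd order.trans by blast
            also have "\<dots> \<le> C * (fact n * fact M * 2 ^ (n + M)) * r ^ (n+M)"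
            proof -
              show ?thesis using C0 using r by (intro mult_right_mono mult_left_mono fact_add_le) auto
            qed
            finally have A: "\<bar>Q (F (n+M) t)\<bar> / fact M \<le> C * fact n * 2 ^ (n + M) * r ^ (n+M)"
              by (simp add: field_simps)
            have B: "\<bar>y - x\<bar> ^ M \<le> \<delta> ^ M" using y by (intro power_mono) (auto simp: dist_real_def)
            have "\<bar>Q (F n y)\<bar> \<le> (C * fact n * 2 ^ (n + M) * r ^ (n+M)) * \<delta> ^ M"
            proof -
              have "0 \<le> C * fact n * 2 ^ (n + M) * r ^ (n+M)"
                using C0 r by simp
              then show ?thesis using t A B
                by (smt (verit) abs_ge_zero add_0_right divide_nonneg_nonneg fact_ge_zero mult_mono zero_le_power)
            qed
            also have "\<dots> = K * (2 * r * \<delta>) ^ M"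
              unfolding K_def by (simp add: power_add power_mult_distrib mult_ac)
            also have "(2 * r * \<delta>) = 1/2" using \<delta> by simp
            finally show ?thesis by simp
          qed
          then show ?thesis using zero_by_geom by auto
        qed
        have "Re (F n y) = 0" using gen[OF bounded_linear_Re abs_Re_le_cmod] by simp
        moreover have "Im (F n y) = 0" using gen[OF bounded_linear_Im abs_Im_le_cmod] by simp
        ultimately show ?thesis by (simp add: complex_eq_iff)
      qed
      then show ?thesis unfolding Z_def by auto
    qed
    then show "\<exists>e>0. \<forall>y. dist y x < e \<longrightarrow> y \<in> Z" using \<delta> by auto
  qed
  moreover have "(u + v) / 2 \<in> Z"
  proof -
    have "F n ((u+v)/2) = 0" for n
      by (rule deriv_zero_open[of F "{u<..<v}", OF ch _ zero]) (use uv in auto)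
    then show ?thesis unfolding Z_def by auto
  qed
  ultimately have "Z = UNIV" using clopen by blast
  then show ?thesis unfolding Z_def by auto
qed


context decay begin

lemma Tle_compact: "compact Tle"
proof -
  have "Tle = PiE UNIV (\<lambda>_. cball (0::complex) 1)"
    unfolding Tle_def PiE_def by (auto simp: extensional_def)
  moreover have "compactin (product_topology (\<lambda>_. euclidean) UNIV) (PiE UNIV (\<lambda>_. cball (0::complex) 1))"
    by (simp add: compactin_PiE compactin_euclidean_iff)
  ultimately show ?thesis by (metis euclidean_product_topology compactin_euclidean_iff)
qed

definition T1 where "T1 = {w :: nat \<Rightarrow> complex. \<forall>k. cmod (w k) = 1}"

lemma T1_closed: "closed T1"
proof -
  have "T1 = (\<Inter>k. {w. cmod (w k) = 1})" unfolding T1_def by auto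
  moreover have "closed {w :: nat \<Rightarrow> complex. cmod (w k) = 1}" for k
    by (intro closed_Collect_eq continuous_on_norm continuous_on_const continuous_on_product_coordinates)
  ultimately show ?thesis by (metis closed_INT)
qed

lemma T1_Tle: "T1 \<subseteq> Tle" unfolding T1_def Tle_def by auto

definition \<Phi> where "\<Phi> u = (\<lambda>k. ph (\<tau> k) u)"
definition Orb where "Orb = closure (range \<Phi>)"

lemma Orb_T1: "Orb \<subseteq> T1"
proof -
  have "range \<Phi> \<subseteq> T1" unfolding T1_def \<Phi>_def by auto
  then show ?thesis unfolding Orb_def using T1_closed closure_minimal by blast
qed

lemma Orb_compact: "compact Orb"
proof -
  have "Tle \<inter> Orb = Orb" using Orb_T1 T1_Tle by auto
  moreover have "compact (Tle \<inter> Orb)"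
    by (rule compact_Int_closed[OF Tle_compact]) (simp add: Orb_def)
  ultimately show ?thesis by simp
qed

lemma mult_cont: "continuous_on UNIV (\<lambda>v :: nat \<Rightarrow> complex. (\<lambda>k. w k * v k))"
  by (intro continuous_on_coordinatewise_then_product continuous_on_mult continuous_on_const continuous_on_product_coordinates)

lemma FS_chain_T: "w \<in> Tle \<Longrightarrow> (FS a \<tau> n w has_vector_derivative FS a \<tau> (Suc n) w s) (at s)"
  using FS_chain unfolding Tle_def by auto

lemma FS_bound_T: "w \<in> Tle \<Longrightarrow> cmod (FS a \<tau> n w s) \<le> Cs * fact n * (2 * pi / \<eta>) ^ n"
  using FS_bound unfolding Tle_def by auto

lemma claim1:
  assumes nz: "FS a \<tau> 0 (\<lambda>_. 1) y0 \<noteq> 0" and w: "w \<in> Orb" and h: "h > 0"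
  shows "\<exists>s\<in>{0<..<h}. FS a \<tau> 0 w s \<noteq> 0"
proof (rule ccontr)
  assume "\<not> ?thesis"
  then have z: "\<And>s. s \<in> {0<..<h} \<Longrightarrow> FS a \<tau> 0 w s = 0" by auto
  have wT: "w \<in> T1" using w Orb_T1 by auto
  have wTle: "w \<in> Tle" using wT T1_Tle by auto
  have r: "2 * pi / \<eta> > 0" using eta by auto
  have all0: "FS a \<tau> 0 w y = 0" for y
    by (rule identity_chain[of "\<lambda>n. FS a \<tau> n w", OF FS_chain_T[OF wTle] FS_bound_T[OF wTle] r z h])
  define Q where "Q s = Tle \<inter> (\<lambda>v. FS a \<tau> 0 (\<lambda>k. w k * v k) s) -` {0}" for s
  have mTle: "(\<lambda>k. w k * v k) \<in> Tle" if "v \<in> Tle" for v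
    using that wT unfolding Tle_def T1_def by (auto simp: norm_mult)
  have contQ: "continuous_on Tle (\<lambda>v. FS a \<tau> 0 (\<lambda>k. w k * v k) s)" for s
    by (rule continuous_on_compose2[OF FS_cont continuous_on_subset[OF mult_cont]]) (use mTle in auto)
  have Qc: "closed (Q s)" for s
    unfolding Q_def by (rule continuous_closed_preimage[OF contQ]) (use Tle_compact compact_imp_closed in auto)
  have "range \<Phi> \<subseteq> Q s" for s
  proof
    fix v assume "v \<in> range \<Phi>"
    then obtain u where u: "v = \<Phi> u" by auto
    have "FS a \<tau> 0 (\<lambda>k. w k * v k) s = FS a \<tau> 0 w (u + s)" unfolding u \<Phi>_def by (rule FS_shift)
    moreover have "v \<in> Tle" unfolding u \<Phi>_def Tle_def by simp
    ultimately show "v \<in> Q s" unfolding Q_def using all0 by simp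
  qed
  then have OQ: "Orb \<subseteq> Q s" for s unfolding Orb_def using Qc closure_minimal by blast
  have cnjO: "(\<lambda>k. cnj (w k)) \<in> Orb"
  proof -
    have cc: "continuous_on UNIV (\<lambda>v :: nat \<Rightarrow> complex. (\<lambda>k. cnj (v k)))"
    proof (rule continuous_on_coordinatewise_then_product)
      fix i
      show "continuous_on UNIV (\<lambda>x::nat\<Rightarrow>complex. cnj (x i))"
        using bounded_linear.continuous_on[OF bounded_linear_cnj continuous_on_product_coordinates[of i]] by simp
    qed
    have "(\<lambda>v. (\<lambda>k. cnj (v k))) ` closure (range \<Phi>) \<subseteq> closure ((\<lambda>v. (\<lambda>k. cnj (v k))) ` range \<Phi>)"
      by (rule continuous_image_closure_subset[OF cc]) auto
    moreover have "(\<lambda>v. (\<lambda>k. cnj (v k))) ` range \<Phi> = range \<Phi>"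
    proof -
      have "(\<lambda>k. cnj (\<Phi> u k)) = \<Phi> (- u)" for u
        unfolding \<Phi>_def ph_def by (auto simp: exp_cnj)
      then show ?thesis by (auto simp: image_iff) (metis minus_minus)
    qed
    ultimately show ?thesis using w unfolding Orb_def by auto
  qed
  have "FS a \<tau> 0 (\<lambda>k. w k * cnj (w k)) y0 = 0" using OQ[of y0] cnjO unfolding Q_def by auto
  moreover have "(\<lambda>k. w k * cnj (w k)) = (\<lambda>_. 1)"
  proof
    fix k
    have "w k * cnj (w k) = of_real (cmod (w k) ^ 2)" by (rule complex_norm_square[symmetric])
    then show "w k * cnj (w k) = 1" using wT unfolding T1_def by simp
  qed
  ultimately show False using nz by simp
qed

lemma good_windows_FS:
  assumes nz: "FS a \<tau> 0 (\<lambda>_. 1) y0 \<noteq> 0" and h: "h > 0"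
  shows "\<exists>m1>0. \<forall>u. \<exists>x\<in>{u..u+h}. m1 \<le> cmod (FS a \<tau> 0 (\<lambda>_. 1) x)"
proof -
  obtain sw where sw: "\<And>w. w \<in> Orb \<Longrightarrow> sw w \<in> {0<..<h} \<and> FS a \<tau> 0 w (sw w) \<noteq> 0"
    using claim1[OF nz _ h] by metis
  define cw where "cw w = cmod (FS a \<tau> 0 w (sw w)) / 2" for w
  have Vex: "\<exists>V. open V \<and> V \<inter> Tle = {v. cw w < cmod (FS a \<tau> 0 v (sw w))} \<inter> Tle" for w
  proof -
    have "continuous_on Tle (\<lambda>v. cmod (FS a \<tau> 0 v (sw w)))"
      by (intro continuous_intros FS_cont)
    then obtain A where "open A" "A \<inter> Tle = (\<lambda>v. cmod (FS a \<tau> 0 v (sw w))) -` {cw w<..} \<inter> Tle"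
      unfolding continuous_on_open_invariant by (meson open_greaterThan)
    then show ?thesis by (intro exI[of _ A]) auto
  qed
  then obtain V where V: "\<And>w. open (V w)" "\<And>w. V w \<inter> Tle = {v. cw w < cmod (FS a \<tau> 0 v (sw w))} \<inter> Tle"
    by metis
  have cover: "Orb \<subseteq> \<Union> (V ` Orb)"
  proof
    fix w assume w: "w \<in> Orb"
    have "w \<in> Tle" using w Orb_T1 T1_Tle by auto
    moreover have "cw w < cmod (FS a \<tau> 0 w (sw w))" using sw[OF w] unfolding cw_def by auto
    ultimately have "w \<in> V w" using V(2)[of w] by blast
    then show "w \<in> \<Union> (V ` Orb)" using w by auto
  qed
  obtain W where W: "W \<subseteq> Orb" "finite W" "Orb \<subseteq> \<Union> (V ` W)"
    by (rule compactE_image[OF Orb_compact V(1) cover]) auto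
  have Phi0: "\<Phi> 0 \<in> Orb" unfolding Orb_def by (simp add: closure_subset[THEN subsetD])
  then have Wne: "W \<noteq> {}" using W by auto
  define m1 where "m1 = Min (cw ` W)"
  have cwpos: "cw w > 0" if "w \<in> Orb" for w using sw[OF that] unfolding cw_def by auto
  have m1pos: "m1 > 0" unfolding m1_def using W Wne cwpos by (subst Min_gr_iff) auto
  show ?thesis
  proof (intro exI[of _ m1] conjI allI m1pos)
    fix u
    have "\<Phi> u \<in> Orb" unfolding Orb_def by (simp add: closure_subset[THEN subsetD])
    then obtain w where w: "w \<in> W" "\<Phi> u \<in> V w" using W by auto
    have "\<Phi> u \<in> Tle" unfolding \<Phi>_def Tle_def by simp
    then have lt: "cw w < cmod (FS a \<tau> 0 (\<Phi> u) (sw w))" using V(2)[of w] w(2) by blast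
    have "FS a \<tau> 0 (\<Phi> u) (sw w) = FS a \<tau> 0 (\<lambda>_. 1) (u + sw w)"
      using FS_shift[where w="\<lambda>_. 1" and u=u and n=0 and s="sw w"] unfolding \<Phi>_def by simp
    moreover have "m1 \<le> cw w" unfolding m1_def using W w by auto
    moreover have "u + sw w \<in> {u..u+h}" using sw w W by fastforce
    ultimately show "\<exists>x\<in>{u..u + h}. m1 \<le> cmod (FS a \<tau> 0 (\<lambda>_. 1) x)" using lt
      by (intro bexI[of _ "u + sw w"]) auto
  qed
qed

end


lemma mpoi_mult: "map_poly (of_int :: int \<Rightarrow> 'a::comm_ring_1) (p * q) = map_poly of_int p * map_poly of_int q"
  by (rule poly_eqI) (simp add: coeff_map_poly coeff_mult)

lemma mpoi_add: "map_poly (of_int :: int \<Rightarrow> 'a::comm_ring_1) (p + q) = map_poly of_int p + map_poly of_int q"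
  by (rule poly_eqI) (simp add: coeff_map_poly)

lemma mpoi_smult: "map_poly (of_int :: int \<Rightarrow> 'a::comm_ring_1) (smult c q) = smult (of_int c) (map_poly of_int q)"
  by (rule poly_eqI) (simp add: coeff_map_poly)

lemma mpoi_const [simp]: "map_poly (of_int :: int \<Rightarrow> 'a::comm_ring_1) [:c:] = [:of_int c:]"
  by (rule poly_eqI) (simp add: coeff_map_poly coeff_pCons split: nat.splits)

lemma galois_int:
  fixes p q :: "int poly" and \<alpha> :: complex
  assumes irr: "irreducible p" and deg: "degree p \<ge> 1"
    and rt: "poly (map_poly of_int p) \<alpha> = 0" and q\<alpha>: "poly (map_poly of_int q) \<alpha> = 0"
  shows "p dvd q"
proof -
  define ev where "ev t = poly (map_poly (of_int :: int \<Rightarrow> complex) t) \<alpha>" for t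
  have ev_mult: "ev (s * t) = ev s * ev t" for s t unfolding ev_def by (simp add: mpoi_mult)
  have ev_add: "ev (s + t) = ev s + ev t" for s t unfolding ev_def by (simp add: mpoi_add)
  have ev_smult: "ev (smult c t) = of_int c * ev t" for c t unfolding ev_def by (simp add: mpoi_smult)
  have prime: "prime_elem p" using irr by (rule irreducible_imp_prime_poly)
  have p0: "p \<noteq> 0" using irr by auto
  have L: "t \<noteq> 0 \<longrightarrow> degree t < degree p \<longrightarrow> ev t \<noteq> 0" for t
  proof (induction "degree t" arbitrary: t rule: less_induct)
    case less
    show ?case
    proof (intro impI notI)
      assume t0: "t \<noteq> 0" and dt: "degree t < degree p" and et: "ev t = 0"
      show False
      proof (cases "degree t = 0")
        case True
        then obtain c where c: "t = [:c:]" by (metis degree_eq_zeroE)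
        then have "c \<noteq> 0" using t0 by auto
        moreover have "ev t = of_int c" unfolding c ev_def by simp
        ultimately show False using et by simp
      next
        case False
        define s where "s = pseudo_mod p t"
        obtain b w where bw: "b \<noteq> 0" "smult b p = t * w + s"
          using pseudo_mod(1)[OF t0, of p] unfolding s_def by blast
        have sdeg: "s = 0 \<or> degree s < degree t" using pseudo_mod(2)[OF t0, of p] unfolding s_def by blast
        have es: "ev s = 0"
        proof -
          have "ev (smult b p) = ev (t * w) + ev s" using bw(2) ev_add by simp
          moreover have "ev p = 0" using rt ev_def by simp
          ultimately show ?thesis using et ev_smult ev_mult by simp
        qed
        have s0: "s = 0"
        proof (rule ccontr)
          assume "s \<noteq> 0"
          then have "degree s < degree t" using sdeg by auto
          with less[of s] have "s \<noteq> 0 \<longrightarrow> degree s < degree p \<longrightarrow> ev s \<noteq> 0" by simp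
          then show False using \<open>s \<noteq> 0\<close> \<open>degree s < degree t\<close> dt es by simp
        qed
        have "p dvd t * w"
        proof -
          have "p dvd smult b p" by (rule dvd_smult) simp
          then show ?thesis using bw(2) s0 by simp
        qed
        then have "p dvd t \<or> p dvd w" using prime prime_elem_dvd_multD by blast
        then show False
        proof
          assume "p dvd t" then show False using dvd_imp_degree_le[OF _ t0] dt by fastforce
        next
          assume "p dvd w"
          then obtain w' where w': "w = p * w'" by blast
          have "[:b:] * p = (t * w') * p" using bw(2) s0 w' by (simp add: mult_ac)
          then have "[:b:] = t * w'" using p0 mult_right_cancel by blast
          then have "degree t = 0" using bw(1)
            by (metis add_is_0 degree_mult_eq degree_pCons_0 mult_zero_right pCons_eq_0_iff t0)
          then show False using False by simp
        qed
      qed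
    qed
  qed
  define s where "s = pseudo_mod q p"
  obtain b w where bw: "b \<noteq> 0" "smult b q = p * w + s"
    using pseudo_mod(1)[OF p0, of q] unfolding s_def by blast
  have sdeg: "s = 0 \<or> degree s < degree p" using pseudo_mod(2)[OF p0, of q] unfolding s_def by blast
  have es: "ev s = 0"
  proof -
    have "ev (smult b q) = ev (p * w) + ev s" using bw(2) ev_add by simp
    then show ?thesis using rt q\<alpha> ev_smult ev_mult unfolding ev_def by simp
  qed
  have s0: "s = 0" using L[of s] sdeg es by auto
  have "p dvd [:b:] * q" using bw(2) s0 by simp
  then have "p dvd [:b:] \<or> p dvd q" using prime prime_elem_dvd_multD by blast
  then show ?thesis
  proof
    assume "p dvd [:b:]"
    then have "degree p \<le> 0" using dvd_imp_degree_le[of p "[:b:]"] bw(1) by simp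
    then show ?thesis using deg by simp
  qed
qed


context decay begin

lemma summable_norm_a: "summable (\<lambda>k. cmod (a k))"
proof (rule summable_comparison_test'[OF sd])
  fix k
  have "cmod (a k) * 1 \<le> cmod (a k) * exp (\<eta> * \<bar>\<tau> k\<bar>)"
    using eta by (intro mult_left_mono) auto
  then show "norm (cmod (a k)) \<le> cmod (a k) * exp (\<eta> * \<bar>\<tau> k\<bar>)" by simp
qed

lemma regroup:
  fixes E :: "nat \<Rightarrow> complex"
  assumes fib: "\<And>l. (\<Sum>k. if \<tau> k = l then a k else 0) = 0"
    and EE: "\<And>k k'. \<tau> k = \<tau> k' \<Longrightarrow> E k = E k'"
    and Eb: "\<And>k. cmod (E k) \<le> 1"
  shows "(\<Sum>k. a k * E k) = 0"
proof -
  define b where "b k = a k * E k" for k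
  have nb: "cmod (b k) \<le> cmod (a k)" for k
    unfolding b_def using Eb[of k] by (simp add: norm_mult mult_left_le)
  have sb: "summable (\<lambda>k. cmod (b k))"
    by (rule summable_comparison_test'[OF summable_norm_a]) (use nb in auto)
  have hb: "(b has_sum (\<Sum>k. b k)) UNIV"
    by (rule norm_summable_imp_has_sum[OF sb summable_sums[OF summable_norm_cancel[OF sb]]])
  define h where "h k = (\<tau> k, k)" for k
  define SS where "SS = Sigma (range \<tau>) (\<lambda>l. {k. \<tau> k = l})"
  have inj: "inj_on h UNIV" unfolding h_def inj_on_def by auto
  have img: "h ` UNIV = SS" unfolding h_def SS_def by (auto simp: image_iff)
  define g where "g = (\<lambda>(l::real, k::nat). b k)"
  have "(g \<circ> h) = b" unfolding g_def h_def by auto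
  then have hg: "(g has_sum (\<Sum>k. b k)) SS"
    using has_sum_reindex[OF inj, of g] hb img by simp
  have fiber: "((\<lambda>k. g (l, k)) has_sum 0) {k. \<tau> k = l}" if lr: "l \<in> range \<tau>" for l
  proof -
    define a' where "a' k = (if \<tau> k = l then a k else 0)" for k
    have na': "cmod (a' k) \<le> cmod (a k)" for k unfolding a'_def by auto
    have sa': "summable (\<lambda>k. cmod (a' k))"
      by (rule summable_comparison_test'[OF summable_norm_a]) (use na' in auto)
    have "(a' has_sum (\<Sum>k. a' k)) UNIV"
      by (rule norm_summable_imp_has_sum[OF sa' summable_sums[OF summable_norm_cancel[OF sa']]])
    then have "(a' has_sum 0) UNIV" using fib[of l] unfolding a'_def by simp
    then have ha: "(a has_sum 0) {k. \<tau> k = l}"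
      by (rule has_sum_cong_neutral[THEN iffD1, rotated -1]) (auto simp: a'_def)
    obtain k0 where k0: "\<tau> k0 = l" using lr by auto
    have "((\<lambda>k. a k * E k0) has_sum 0 * E k0) {k. \<tau> k = l}"
      by (rule has_sum_cmult_left[OF ha])
    moreover have "b k = a k * E k0" if "\<tau> k = l" for k
      unfolding b_def using EE[of k k0] that k0 by simp
    ultimately have "(b has_sum 0) {k. \<tau> k = l}"
      using has_sum_cong[of "{k. \<tau> k = l}" b "\<lambda>k. a k * E k0" 0] by auto
    then show ?thesis unfolding g_def by simp
  qed
  have "((\<lambda>_. 0::complex) has_sum (\<Sum>k. b k)) (range \<tau>)"
    by (rule has_sum_SigmaD[OF hg[unfolded SS_def]]) (use fiber in \<open>auto simp: g_def\<close>)
  then have "(\<Sum>k. b k) = 0" using has_sum_0_simp has_sum_unique by blast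
  then show ?thesis unfolding b_def .
qed

end


lemma avg_bound:
  fixes x :: complex assumes "cmod x = 1"
  shows "cmod ((\<Sum>n<N. x ^ n) / of_nat N) \<le> 1"
proof (cases "N = 0")
  case True then show ?thesis by simp
next
  case False
  have "cmod (\<Sum>n<N. x ^ n) \<le> (\<Sum>n<N. cmod (x ^ n))" by (rule norm_sum)
  also have "\<dots> = of_nat N" using assms by (simp add: norm_power)
  finally show ?thesis using False by (simp add: norm_divide)
qed

lemma avg_tendsto:
  fixes x :: complex assumes "cmod x = 1" "x \<noteq> 1"
  shows "(\<lambda>N. (\<Sum>n<N. x ^ n) / of_nat N) \<longlonglongrightarrow> 0"
proof (rule Lim_null_comparison)
  have x1: "1 - x \<noteq> 0" using assms by simp
  show "\<forall>\<^sub>F N in sequentially. cmod ((\<Sum>n<N. x ^ n) / of_nat N) \<le> (2 / cmod (1 - x)) * (1 / real N)"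
  proof (rule always_eventually, rule allI)
    fix N :: nat
    have "cmod (\<Sum>n<N. x ^ n) = cmod ((1 - x ^ N) / (1 - x))"
      using assms by (simp add: sum_gp_strict)
    also have "\<dots> \<le> 2 / cmod (1 - x)"
    proof -
      have "cmod (1 - x ^ N) \<le> 2"
        using norm_triangle_ineq4[of 1 "x ^ N"] assms by (simp add: norm_power)
      then show ?thesis using x1 by (simp add: norm_divide divide_right_mono)
    qed
    finally have "cmod (\<Sum>n<N. x ^ n) / real N \<le> (2 / cmod (1 - x)) / real N"
      by (rule divide_right_mono) simp
    moreover have "cmod ((\<Sum>n<N. x ^ n) / of_nat N) = cmod (\<Sum>n<N. x ^ n) / real N"
      by (simp add: norm_divide)
    moreover have "(2 / cmod (1 - x)) * (1 / real N) = (2 / cmod (1 - x)) / real N" by simp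
    ultimately show "cmod ((\<Sum>n<N. x ^ n) / of_nat N) \<le> (2 / cmod (1 - x)) * (1 / real N)"
      by simp
  qed
  show "(\<lambda>N. (2 / cmod (1 - x)) * (1 / real N)) \<longlonglongrightarrow> 0"
    using tendsto_mult_right_zero[OF lim_inverse_n', of "2 / cmod (1 - x)"] by (simp only:)
qed

context decay begin

lemma fourier_unique:
  assumes z: "\<And>y. FS a \<tau> 0 (\<lambda>_. 1) y = 0"
  shows "(\<Sum>k. if \<tau> k = l then a k else 0) = 0"
proof -
  define B where "B = (\<Union>k\<in>{k. \<tau> k \<noteq> l}. range (\<lambda>q::int. of_int q / (\<tau> k - l)))"
  have cB: "countable B" unfolding B_def by (intro countable_UN countable_image) auto
  have "\<not> {1..2::real} \<subseteq> B" using uncountable_closed_interval[of 1 2] cB countable_subset by auto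
  then obtain \<delta> where \<delta>: "\<delta> \<in> {1..2}" "\<delta> \<notin> B" by blast
  define w where "w k = exp (- 2 * of_real pi * \<i> * of_real ((\<tau> k - l) * \<delta>))" for k
  have cw: "cmod (w k) = 1" for k unfolding w_def by (simp add: norm_exp_eq_Re)
  have w1: "w k = 1 \<longleftrightarrow> \<tau> k = l" for k
  proof
    assume "\<tau> k = l" then show "w k = 1" unfolding w_def by simp
  next
    assume wk: "w k = 1"
    show "\<tau> k = l"
    proof (rule ccontr)
      assume ne: "\<tau> k \<noteq> l"
      from wk obtain n :: int where n: "Im (- 2 * of_real pi * \<i> * of_real ((\<tau> k - l) * \<delta>)) = of_int (2 * n) * pi"
        unfolding w_def exp_eq_1 by blast
      then have "- 2 * pi * ((\<tau> k - l) * \<delta>) = 2 * of_int n * pi" by simp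
      then have "pi * ((\<tau> k - l) * \<delta> + of_int n) = 0" by (simp add: algebra_simps)
      then have "(\<tau> k - l) * \<delta> = of_int (- n)" by simp
      then have "\<delta> = of_int (- n) / (\<tau> k - l)" using ne by (simp add: field_simps)
      then have "\<delta> \<in> B" unfolding B_def using ne by blast
      then show False using \<delta> by simp
    qed
  qed
  have sa: "summable (\<lambda>k. a k * c k)" if "\<And>k. cmod (c k) \<le> 1" for c :: "nat \<Rightarrow> complex"
  proof (rule summable_comparison_test'[OF summable_norm_a])
    show "norm (a k * c k) \<le> cmod (a k)" for k using that[of k] by (simp add: norm_mult mult_left_le)
  qed
  have pw: "(\<Sum>k. a k * w k ^ n) = 0" for n
  proof -
    define y where "y = real n * \<delta>"
    have "0 = FS a \<tau> 0 (\<lambda>_. 1) y" using z by simp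
    also have "\<dots> = (\<Sum>k. a k * ph (\<tau> k) y)" unfolding FS_def by simp
    finally have "0 = (\<Sum>k. a k * ph (\<tau> k) y) * exp (2 * of_real pi * \<i> * of_real (l * y))" by simp
    also have "\<dots> = (\<Sum>k. a k * ph (\<tau> k) y * exp (2 * of_real pi * \<i> * of_real (l * y)))"
      by (rule suminf_mult2, rule sa) simp
    also have "\<dots> = (\<Sum>k. a k * w k ^ n)"
    proof (rule suminf_cong)
      fix k
      have "ph (\<tau> k) y * exp (2 * of_real pi * \<i> * of_real (l * y)) =
            exp (of_nat n * (- 2 * of_real pi * \<i> * of_real ((\<tau> k - l) * \<delta>)))"
        unfolding ph_def y_def by (simp add: exp_add[symmetric] algebra_simps)
      also have "\<dots> = w k ^ n" unfolding w_def by (rule exp_of_nat_mult)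
      finally show "a k * ph (\<tau> k) y * exp (2 * of_real pi * \<i> * of_real (l * y)) = a k * w k ^ n"
        by (simp add: mult.assoc)
    qed
    finally show ?thesis by simp
  qed
  define avg where "avg N x = (\<Sum>n<N. x ^ n) / of_nat N" for N and x :: complex
  have s0: "(\<Sum>k. a k * avg N (w k)) = 0" for N
  proof -
    have "(\<Sum>k. a k * avg N (w k)) = (\<Sum>k. (\<Sum>n<N. a k * w k ^ n) / of_nat N)"
      unfolding avg_def by (simp add: sum_distrib_left)
    also have "\<dots> = (\<Sum>k. (\<Sum>n<N. a k * w k ^ n)) / of_nat N"
    proof (rule suminf_divide)
      show "summable (\<lambda>k. \<Sum>n<N. a k * w k ^ n)"
        by (rule summable_sum) (rule sa, simp add: cw norm_power)
    qed
    also have "(\<Sum>k. (\<Sum>n<N. a k * w k ^ n)) = (\<Sum>n<N. \<Sum>k. a k * w k ^ n)"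
      by (rule suminf_sum) (rule sa, simp add: cw norm_power)
    also have "\<dots> = 0" using pw by simp
    finally show ?thesis by simp
  qed
  have T: "eventually (\<lambda>N. summable (\<lambda>k. norm (a k * avg N (w k)))) sequentially \<and>
           summable (\<lambda>k. norm (if \<tau> k = l then a k else 0)) \<and>
           ((\<lambda>N. \<Sum>k. a k * avg N (w k)) \<longlongrightarrow> (\<Sum>k. if \<tau> k = l then a k else 0)) sequentially"
  proof (rule tannerys_theorem[where M = "\<lambda>k. cmod (a k)"])
    fix k
    show "((\<lambda>N. a k * avg N (w k)) \<longlongrightarrow> (if \<tau> k = l then a k else 0)) sequentially"
    proof (cases "\<tau> k = l")
      case True
      have w1k: "w k = 1" using True w1 by simp
      have "\<forall>\<^sub>F N in sequentially. a k * avg N (w k) = a k"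
        using eventually_gt_at_top[of "0::nat"] by (rule eventually_mono) (simp add: avg_def w1k)
      then show ?thesis using True by (simp add: tendsto_eventually)
    next
      case False
      then have "w k \<noteq> 1" using w1 by simp
      then have "(\<lambda>N. avg N (w k)) \<longlonglongrightarrow> 0" unfolding avg_def by (rule avg_tendsto[OF cw])
      then show ?thesis using False tendsto_mult_right_zero by auto
    qed
  next
    show "\<forall>\<^sub>F (k, N) in at_top \<times>\<^sub>F sequentially. norm (a k * avg N (w k)) \<le> cmod (a k)"
    proof (rule always_eventually, safe)
      fix k N
      have "norm (a k * avg N (w k)) = cmod (a k) * cmod (avg N (w k))" by (simp add: norm_mult)
      also have "\<dots> \<le> cmod (a k) * 1"
        by (intro mult_left_mono) (auto simp: avg_def intro: avg_bound cw)
      finally show "norm (a k * avg N (w k)) \<le> cmod (a k)" by simp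
    qed
  next
    show "summable (\<lambda>k. cmod (a k))" by (rule summable_norm_a)
  qed simp
  then have "(\<lambda>N. 0::complex) \<longlonglongrightarrow> (\<Sum>k. if \<tau> k = l then a k else 0)" using s0 by simp
  then show ?thesis using LIMSEQ_unique tendsto_const by blast
qed

end


lemma mpoi_sum: "map_poly (of_int :: int \<Rightarrow> 'a::comm_ring_1) (\<Sum>j\<in>J. f j) = (\<Sum>j\<in>J. map_poly of_int (f j))"
proof (induction J rule: infinite_finite_induct)
  case (insert x F) then show ?case by (simp add: mpoi_add)
qed auto

lemma root_nonzero:
  fixes p :: "int poly" and z :: complex
  assumes irr: "irreducible p" and deg: "degree p \<ge> 2" and zr: "poly (map_poly of_int p) z = 0"
  shows "z \<noteq> 0"
proof
  assume z0: "z = 0"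
  have "of_int (coeff p 0) = (0::complex)" using zr z0 by (simp add: poly_0_coeff_0 coeff_map_poly)
  then have "poly p 0 = 0" by (simp add: poly_0_coeff_0)
  then have "[:0,1:] dvd p" using poly_eq_0_iff_dvd[of p 0] by simp
  then obtain r where r: "p = [:0,1:] * r" by blast
  from irreducibleD[OF irr r] have "is_unit [:0::int,1:] \<or> is_unit r" .
  then show False
  proof
    assume "is_unit [:0::int,1:]" then show False by (auto simp: is_unit_poly_iff)
  next
    assume "is_unit r"
    then obtain c where "r = [:c:]" "c dvd 1" by (auto simp: is_unit_poly_iff)
    then have "degree p \<le> 1" using r by (simp add: degree_mult_le)
    then show False using deg by simp
  qed
qed

lemma galois_powi:
  fixes p :: "int poly" and \<alpha> :: real and z :: complex and c :: "int \<Rightarrow> int"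
  assumes irr: "irreducible p" and deg: "degree p \<ge> 2"
    and rt: "poly (map_poly of_int p) (of_real \<alpha>) = (0::complex)"
    and zr: "poly (map_poly of_int p) z = 0"
    and fin: "finite J" and cs: "(\<Sum>j\<in>J. of_int (c j) * \<alpha> powi j) = 0"
  shows "(\<Sum>j\<in>J. of_int (c j) * z powi j) = 0"
proof -
  define N where "N = (\<Sum>j\<in>J. nat (- j))"
  have Nj: "j + int N \<ge> 0" if "j \<in> J" for j
  proof -
    have "nat (- j) \<le> N" unfolding N_def using fin that by (intro member_le_sum) auto
    then show ?thesis by linarith
  qed
  define q where "q = (\<Sum>j\<in>J. monom (c j) (nat (j + int N)))"
  have evq: "poly (map_poly of_int q) \<zeta> = \<zeta> ^ N * (\<Sum>j\<in>J. of_int (c j) * \<zeta> powi j)" if nz: "\<zeta> \<noteq> 0" for \<zeta> :: complex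
  proof -
    have "poly (map_poly of_int q) \<zeta> = (\<Sum>j\<in>J. of_int (c j) * \<zeta> ^ nat (j + int N))"
      unfolding q_def mpoi_sum by (simp add: poly_sum map_poly_monom poly_monom)
    also have "\<dots> = (\<Sum>j\<in>J. \<zeta> ^ N * (of_int (c j) * \<zeta> powi j))"
    proof (rule sum.cong[OF refl])
      fix j assume j: "j \<in> J"
      have "\<zeta> ^ nat (j + int N) = \<zeta> powi (j + int N)"
        using Nj[OF j] by (metis power_int_of_nat int_nat_eq)
      also have "\<dots> = \<zeta> powi j * \<zeta> ^ N" using nz by (simp add: power_int_add)
      finally show "of_int (c j) * \<zeta> ^ nat (j + int N) = \<zeta> ^ N * (of_int (c j) * \<zeta> powi j)"
        by (simp add: mult_ac)
    qed
    also have "\<dots> = \<zeta> ^ N * (\<Sum>j\<in>J. of_int (c j) * \<zeta> powi j)" by (simp add: sum_distrib_left)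
    finally show ?thesis .
  qed
  have a0: "(of_real \<alpha> :: complex) \<noteq> 0" using root_nonzero[OF irr deg rt] .
  have "(\<Sum>j\<in>J. of_int (c j) * (of_real \<alpha> :: complex) powi j) = of_real (\<Sum>j\<in>J. of_int (c j) * \<alpha> powi j)"
    by (simp add: of_real_power_int)
  then have "poly (map_poly of_int q) (of_real \<alpha>) = (0::complex)" using evq[OF a0] cs by simp
  then have "p dvd q" using galois_int[OF irr _ rt] deg by simp
  then obtain r where r: "q = p * r" by blast
  have "poly (map_poly of_int q) z = 0" unfolding r mpoi_mult using zr by simp
  moreover have z0: "z \<noteq> 0" using root_nonzero[OF irr deg zr] .
  ultimately show ?thesis using evq[OF z0] by simp
qed


lemma e1_add: "e1 (x + y) = e1 x * e1 y"
  unfolding e1_def by (simp add: distrib_left exp_add)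

lemma e1_nz: "e1 x \<noteq> 0" unfolding e1_def by simp

lemma e1_zero [simp]: "e1 0 = 1" unfolding e1_def by simp

lemma e1_nat: "e1 (of_nat n * x) = e1 x ^ n"
proof -
  have "e1 (of_nat n * x) = exp (of_nat n * (2 * of_real pi * \<i> * x))"
    unfolding e1_def by (simp only: mult_ac)
  also have "\<dots> = e1 x ^ n" unfolding e1_def by (rule exp_of_nat_mult)
  finally show ?thesis .
qed

lemma e1_int: "e1 (of_int c * x) = e1 x powi c"
proof (cases "c \<ge> 0")
  case True
  define n where "n = nat c"
  have n: "c = int n" using True n_def by simp
  have "e1 (of_int c * x) = e1 (of_nat n * x)" unfolding n by simp
  also have "\<dots> = e1 x ^ n" by (rule e1_nat)
  finally show ?thesis unfolding n by (simp only: power_int_of_nat)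
next
  case False
  define n where "n = nat (- c)"
  have n: "c = - int n" using False n_def by simp
  have "e1 (of_int c * x) * e1 (of_nat n * x) = e1 (of_int c * x + of_nat n * x)" by (rule e1_add[symmetric])
  also have "of_int c * x + of_nat n * x = 0" unfolding n by simp
  finally have "e1 (of_int c * x) = inverse (e1 (of_nat n * x))"
    using e1_nz by (simp add: field_simps)
  also have "\<dots> = inverse (e1 x ^ n)" by (simp only: e1_nat)
  finally show ?thesis unfolding n by (simp only: power_int_minus power_int_of_nat)
qed

lemma e1_sum: "finite J \<Longrightarrow> e1 (\<Sum>j\<in>J. f j) = (\<Prod>j\<in>J. e1 (f j))"
  by (induction J rule: finite_induct) (auto simp: e1_add)

lemma closure_rel:
  fixes p :: "int poly" and \<alpha> :: real and alphas :: "nat \<Rightarrow> complex" and c :: "int \<Rightarrow> int"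
    and theta_S :: "(nat \<Rightarrow> complex) \<Rightarrow> int \<Rightarrow> complex" and g :: "int \<Rightarrow> real"
  assumes irr: "irreducible p" and deg: "degree p \<ge> 2"
    and rt: "poly (map_poly of_int p) (of_real \<alpha>) = (0::complex)"
    and conj_all: "alphas ` {1..d} = {z. poly (map_poly of_int p) z = 0}"
    and vt: "\<And>s j. theta_S s j = (\<Sum>k=1..d. s k * alphas k powi j)"
    and gG: "(\<lambda>j. e1 (of_real (g j))) \<in> closure ((\<lambda>s j. e1 (theta_S s j)) ` S)"
    and fin: "finite J" and cs: "(\<Sum>j\<in>J. of_int (c j) * \<alpha> powi j) = 0"
  shows "e1 (of_real (\<Sum>j\<in>J. of_int (c j) * g j)) = 1"
proof -
  have th0: "(\<Sum>j\<in>J. of_int (c j) * theta_S s j) = 0" for s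
  proof -
    have "(\<Sum>j\<in>J. of_int (c j) * theta_S s j) = (\<Sum>j\<in>J. \<Sum>k=1..d. s k * (of_int (c j) * alphas k powi j))"
      unfolding vt by (simp add: sum_distrib_left mult_ac)
    also have "\<dots> = (\<Sum>k=1..d. s k * (\<Sum>j\<in>J. of_int (c j) * alphas k powi j))"
      by (subst sum.swap) (simp add: sum_distrib_left)
    also have "\<dots> = 0"
    proof (rule sum.neutral, rule ballI)
      fix k assume k: "k \<in> {1..d}"
      have "poly (map_poly of_int p) (alphas k) = 0" using conj_all k by blast
      then have "(\<Sum>j\<in>J. of_int (c j) * alphas k powi j) = 0"
        by (rule galois_powi[OF irr deg rt _ fin cs])
      then show "s k * (\<Sum>j\<in>J. of_int (c j) * alphas k powi j) = 0" by simp
    qed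
    finally show ?thesis .
  qed
  define P where "P z = (\<Prod>j\<in>J. z j powi c j)" for z :: "int \<Rightarrow> complex"
  have Pe1: "P (\<lambda>j. e1 (w j)) = e1 (\<Sum>j\<in>J. of_int (c j) * w j)" for w
    unfolding P_def using fin by (simp add: e1_sum e1_int)
  define U where "U = {z :: int \<Rightarrow> complex. \<forall>j\<in>J. z j \<noteq> 0}"
  have Uo: "open U"
  proof -
    have "U = (\<Inter>j\<in>J. {z. z j \<noteq> 0}) \<inter> UNIV" unfolding U_def by auto
    moreover have "open {z :: int \<Rightarrow> complex. z j \<noteq> 0}" for j
      by (intro open_Collect_neq continuous_on_product_coordinates continuous_on_const)
    ultimately show ?thesis using fin by (auto intro!: open_INT)
  qed
  have Pc: "continuous_on U P"
    unfolding P_def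
  proof (rule continuous_on_prod)
    fix j assume j: "j \<in> J"
    show "continuous_on U (\<lambda>z. z j powi c j)"
      by (rule continuous_on_power_int[OF continuous_on_subset[OF continuous_on_product_coordinates]])
         (use j in \<open>auto simp: U_def\<close>)
  qed
  define V where "V = P -` (- {1}) \<inter> U"
  have Vo: "open V" unfolding V_def using Pc Uo continuous_on_open_vimage by blast
  show ?thesis
  proof (rule ccontr)
    assume ne: "e1 (of_real (\<Sum>j\<in>J. of_int (c j) * g j)) \<noteq> 1"
    have "P (\<lambda>j. e1 (of_real (g j))) = e1 (\<Sum>j\<in>J. of_int (c j) * of_real (g j))" by (rule Pe1)
    also have "\<dots> = e1 (of_real (\<Sum>j\<in>J. of_int (c j) * g j))" by simp
    finally have "(\<lambda>j. e1 (of_real (g j))) \<in> V" using ne unfolding V_def U_def by (auto simp: e1_nz)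
    then have "V \<inter> closure ((\<lambda>s j. e1 (theta_S s j)) ` S) \<noteq> {}" using gG by auto
    then have "V \<inter> ((\<lambda>s j. e1 (theta_S s j)) ` S) \<noteq> {}" using open_Int_closure_eq_empty[OF Vo] by blast
    then obtain s where "(\<lambda>j. e1 (theta_S s j)) \<in> V" by auto
    moreover have "P (\<lambda>j. e1 (theta_S s j)) = 1" using Pe1 th0 by simp
    ultimately show False unfolding V_def by auto
  qed
qed


theorem theorem3p1:
  fixes \<alpha> :: real and p :: "int poly" and d :: nat
    and alphas :: "nat \<Rightarrow> complex"
    and a :: "nat \<Rightarrow> complex" and \<tau> :: "nat \<Rightarrow> real" and \<tau>k :: "nat \<Rightarrow> int \<Rightarrow> int"
    and S :: "(nat \<Rightarrow> complex) set" and theta_S :: "(nat \<Rightarrow> complex) \<Rightarrow> int \<Rightarrow> complex"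
    and G :: "(int \<Rightarrow> real) set"
    and ahat :: "real \<Rightarrow> complex" and A :: "(int \<Rightarrow> real) \<Rightarrow> complex"
  assumes monic: "lead_coeff p = 1"
    and irred: "irreducible p"
    and root: "poly (map_poly of_int p) (of_real \<alpha>) = (0::complex)"
    and deg: "degree p = d" and d2: "d \<ge> 2"
    and PV: "\<forall>z. poly (map_poly of_int p) z = 0 \<longrightarrow> z \<noteq> of_real \<alpha> \<longrightarrow> cmod z < 1"
    and conj1: "alphas 1 = of_real \<alpha>"
    and conj_inj: "inj_on alphas {1..d}"
    and conj_all: "alphas ` {1..d} = {z. poly (map_poly of_int p) z = 0}"
    and S_def: "S = {s. s 1 \<in> \<real> \<and> (\<forall>k. k \<notin> {1..d} \<longrightarrow> s k = 0) \<and>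
                   (\<forall>j\<in>{1..d}. \<forall>k\<in>{1..d}. alphas j = cnj (alphas k) \<longrightarrow> s j = cnj (s k))}"
    and vartheta_def: "\<And>s j. theta_S s j = (\<Sum>k=1..d. s k * alphas k powi j)"
    and G_def: "G = {g. (\<lambda>j. e1 (of_real (g j))) \<in> closure ((\<lambda>s j. e1 (theta_S s j)) ` S)}"
    and tau_fin: "\<And>k. finite {j. \<tau>k k j \<noteq> 0}"
    and tau_rep: "\<And>k. \<tau> k = (\<Sum>j\<in>{j. \<tau>k k j \<noteq> 0}. of_int (\<tau>k k j) * \<alpha> powi j)"
    and decay: "\<exists>\<eta>>0. summable (\<lambda>k. cmod (a k) * exp (\<eta> * \<bar>\<tau> k\<bar>))"
    and ahat_def: "\<And>y. ahat y = (1 / \<bar>\<alpha>\<bar>) * (\<Sum>k. a k * exp (- 2 * of_real pi * \<i> * of_real (\<tau> k * y)))"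
    and A_def: "\<And>g. A g = (1 / \<bar>\<alpha>\<bar>) *
               (\<Sum>k. a k * exp (- 2 * of_real pi * \<i> * of_real (\<Sum>j\<in>{j. \<tau>k k j \<noteq> 0}. of_int (\<tau>k k j) * g j)))"
    and A_nonzero: "\<exists>g\<in>G. A g \<noteq> 0"
  shows "upper_zero_density ahat < (top::ennreal)"
proof -
  have a0: "\<alpha> \<noteq> 0"
  proof
    assume "\<alpha> = 0"
    then have "A g = 0" for g using A_def by simp
    then show False using A_nonzero by auto
  qed
  obtain \<eta> where eta: "\<eta> > 0" "summable (\<lambda>k. cmod (a k) * exp (\<eta> * \<bar>\<tau> k\<bar>))" using decay by auto
  interpret D: decay a \<tau> \<eta> using eta by unfold_locales
  have degp: "degree p \<ge> 2" using deg d2 by simp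
  have ahat_FS: "ahat y = of_real (1 / \<bar>\<alpha>\<bar>) * FS a \<tau> 0 (\<lambda>_. 1) y" for y
    unfolding ahat_def FS_def ph_def by simp
  have nz: "\<exists>y0. FS a \<tau> 0 (\<lambda>_. 1) y0 \<noteq> 0"
  proof (rule ccontr)
    assume "\<not> ?thesis"
    then have z: "\<And>y. FS a \<tau> 0 (\<lambda>_. 1) y = 0" by auto
    have fib: "\<And>l. (\<Sum>k. if \<tau> k = l then a k else 0) = 0" using D.fourier_unique[OF z] .
    obtain g where g: "g \<in> G" "A g \<noteq> 0" using A_nonzero by auto
    have gcl: "(\<lambda>j. e1 (of_real (g j))) \<in> closure ((\<lambda>s j. e1 (theta_S s j)) ` S)"
      using g(1) G_def by auto
    define X where "X k = (\<Sum>j\<in>{j. \<tau>k k j \<noteq> 0}. of_int (\<tau>k k j) * g j)" for k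
    define E where "E k = exp (- 2 * of_real pi * \<i> * of_real (X k))" for k
    have Eb: "cmod (E k) \<le> 1" for k unfolding E_def by (simp add: norm_exp_eq_Re)
    have EE: "E k = E k'" if tt: "\<tau> k = \<tau> k'" for k k'
    proof -
      define J where "J = {j. \<tau>k k j \<noteq> 0} \<union> {j. \<tau>k k' j \<noteq> 0}"
      have fJ: "finite J" unfolding J_def using tau_fin by auto
      have ext1: "(\<Sum>j\<in>{j. \<tau>k m j \<noteq> 0}. of_int (\<tau>k m j) * x j) = (\<Sum>j\<in>J. of_int (\<tau>k m j) * x j)"
        if m: "m = k \<or> m = k'" for m and x :: "int \<Rightarrow> real"
        by (rule sum.mono_neutral_left[OF fJ]) (use m in \<open>auto simp: J_def\<close>)
      define c where "c j = \<tau>k k j - \<tau>k k' j" for j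
      have cs: "(\<Sum>j\<in>J. of_int (c j) * \<alpha> powi j) = 0"
      proof -
        have "(\<Sum>j\<in>J. of_int (c j) * \<alpha> powi j) = (\<Sum>j\<in>J. of_int (\<tau>k k j) * \<alpha> powi j) - (\<Sum>j\<in>J. of_int (\<tau>k k' j) * \<alpha> powi j)"
          unfolding c_def by (simp add: sum_subtractf algebra_simps)
        also have "\<dots> = \<tau> k - \<tau> k'"
          using ext1[of k "\<lambda>j. \<alpha> powi j"] ext1[of k' "\<lambda>j. \<alpha> powi j"] tau_rep[of k] tau_rep[of k'] by simp
        finally show ?thesis using tt by simp
      qed
      have e: "e1 (of_real (\<Sum>j\<in>J. of_int (c j) * g j)) = 1"
        by (rule closure_rel[OF irred degp root conj_all vartheta_def gcl fJ cs])
      have "(\<Sum>j\<in>J. of_int (c j) * g j) = X k - X k'"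
        unfolding X_def c_def using ext1[of k g] ext1[of k' g]
        by (simp add: sum_subtractf algebra_simps)
      then have e': "exp (2 * of_real pi * \<i> * of_real (X k - X k')) = 1" using e unfolding e1_def by simp
      have "E k' = E k * exp (2 * of_real pi * \<i> * of_real (X k - X k'))"
        unfolding E_def by (simp add: exp_add[symmetric] algebra_simps)
      then show ?thesis using e' by simp
    qed
    have "(\<Sum>k. a k * E k) = 0" by (rule D.regroup[OF fib EE Eb])
    then have "A g = 0" using A_def[of g] unfolding E_def X_def by simp
    then show False using g(2) by simp
  qed
  then obtain y0 where y0: "FS a \<tau> 0 (\<lambda>_. 1) y0 \<noteq> 0" by auto
  define r where "r = 2 * pi / \<eta>"
  define h where "h = \<eta> / (4 * pi)"
  have r0: "r > 0" and h0: "h > 0" and hr: "h * r \<le> 1/2"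
    unfolding r_def h_def using eta by auto
  obtain m1 where m1: "m1 > 0" "\<And>u. \<exists>x\<in>{u..u+h}. m1 \<le> cmod (FS a \<tau> 0 (\<lambda>_. 1) x)"
    using D.good_windows_FS[OF y0 h0] by auto
  define F where "F n s = of_real (1 / \<bar>\<alpha>\<bar>) * FS a \<tau> n (\<lambda>_. 1) s" for n s
  have w1: "\<forall>k. cmod ((\<lambda>_. 1::complex) k) \<le> 1" by simp
  have ch: "(F n has_vector_derivative F (Suc n) x) (at x)" for n x
    unfolding F_def by (intro has_vector_derivative_mult_right D.FS_chain[OF w1])
  have bd: "cmod (F n x) \<le> (D.Cs / \<bar>\<alpha>\<bar>) * fact n * r ^ n" for n x
  proof -
    have "cmod (F n x) = (1 / \<bar>\<alpha>\<bar>) * cmod (FS a \<tau> n (\<lambda>_. 1) x)" unfolding F_def by (simp add: norm_mult norm_divide)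
    also have "\<dots> \<le> (1 / \<bar>\<alpha>\<bar>) * (D.Cs * fact n * r ^ n)"
      unfolding r_def by (intro mult_left_mono D.FS_bound[OF w1]) auto
    finally show ?thesis by simp
  qed
  have good: "\<exists>x\<in>{u..u+h}. m1 / \<bar>\<alpha>\<bar> \<le> cmod (F 0 x)" for u
  proof -
    obtain x where x: "x \<in> {u..u+h}" "m1 \<le> cmod (FS a \<tau> 0 (\<lambda>_. 1) x)" using m1(2) by blast
    have "cmod (F 0 x) = cmod (FS a \<tau> 0 (\<lambda>_. 1) x) / \<bar>\<alpha>\<bar>" unfolding F_def by (simp add: norm_mult norm_divide)
    then show ?thesis using x a0 by (intro bexI[of _ x]) (auto simp: divide_right_mono)
  qed
  have m0: "m1 / \<bar>\<alpha>\<bar> > 0" using m1 a0 by simp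
  have "upper_zero_density (F 0) < top"
    by (rule density_bound[of F, OF ch bd r0 h0 hr m0 good])
  moreover have "F 0 = ahat" unfolding F_def using ahat_FS by auto
  ultimately show ?thesis by simp
qed


end
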